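(* Suppose the cost norm is $\|\cdot\|=\|\cdot\|_2$ and the Margin assumption and Boundedness hold. Let $\{(y_t,b_t)\}_{t\ge1}$ be generated by the gradient-based SMM algorithm with $\gamma_t=1/\sqrt t$ (initialization terminating). Then the algorithm makes finitely many mistakes, i.e. $\hat\ell(r(A_t,y_t,b_t),y_t,b_t)\ne\ell(A_t)$ for only finitely many $t$. If moreover $d_*>2/c$, then $r(A_t,y_t,b_t)\ne A_t$ for only finitely many $t$. If in addition $d_*>2/c$ and the Stochastic assumption holds, then $(y_t,b_t)\to(y_*/\|y_*\|_2,\ b_*/\|y_*\|_2)$ almost surely.
   Context: Setting: $\mathcal{A}\subseteq\mathbb{R}^d$, labels $\ell(A)\in\{\pm1\}$; $\operatorname{sign}(0)=+1$; cost constant $c>0$; norm $\|\cdot\|=\|\cdot\|_2$, $v(y)=y/\|y\|_2$ for $y\ne0$, $v(0)=0$. Predicted label $\hat\ell(x,y,b)=\operatorname{sign}(y^\top x+b-2\|y\|_2/c)$. Response: for $y\ne0$, $r(A,y,b)=A+(\tfrac2c-\tfrac{y^\top A+b}{\|y\|_2})v(y)$ if $0\le\tfrac{y^\top A+b}{\|y\|_2}<\tfrac2c$, else $A$. Proxy: for $y\ne0$, $s(A,y,b)=A-\tfrac{y^\top A+b}{\|y\|_2}v(y)$ if $0\le\tfrac{y^\top A+b}{\|y\|_2}<\tfrac2c$ and $\ell(A)=-1$; $=A+(\tfrac2c-\tfrac{y^\top A+b}{\|y\|_2})v(y)$ if the range condition holds and $\ell(A)=+1$; $=A$ otherwise; $r(A,0,b)=s(A,0,b)=A$.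 Margin function $h(y,b;\widetilde{\mathcal{A}}^+,\widetilde{\mathcal{A}}^-)=\min\{\min_{x\in\widetilde{\mathcal{A}}^+}(y^\top x+b),\min_{x\in\widetilde{\mathcal{A}}^-}(-y^\top x-b)\}$. Margin assumption: $d_*:=\max_{y\ne0,b}\min_{A\in\mathcal{A}}\ell(A)\frac{y^\top A+b}{\|y\|_2}$ attained at some $(y_*,b_* )$, $y_*\ne0$, $d_*>0$. Boundedness: $\sup_{A\in\mathcal{A}}\|A\|_2<\infty$. Stochastic assumption: $\mathcal{A}$ is closed and there is a probability distribution $\mathbb{P}$ on $\mathbb{R}^d$ with $\mathbb{P}[\{x:\|A-x\|_2\le\epsilon\}]>0$ for all $A\in\mathcal{A}$, $\epsilon>0$, and for each $A\notin\mathcal{A}$ some $\epsilon>0$ with $\mathbb{P}[\{x:\|A-x\|_2\le\epsilon\}]=0$; all agents' true features are drawn i.i.d. from $\mathbb{P}$. Gradient-based SMM algorithm: initialization: $\widetilde{\mathcal{A}}_0^\pm=\emptyset$, $(y,b)=(0,1)$; each arriving agent (responding with true $A$) is added to $\widetilde{\mathcal{A}}_0^+$ or $\widetilde{\mathcal{A}}_0^-$ by label; then $b:=-1$ if $\widetilde{\mathcal{A}}_0^+=\emptyset$, else $b:=+1$ if $\widetilde{\mathcal{A}}_0^-=\emptyset$; stop when both nonempty; $(y_1,b_1)$ optimal for $\max\{h(y,b;\widetilde{\mathcal{A}}_0^+,\widetilde{\mathcal{A}}_0^-):\|y\|_2\le1,b\}$; $z_1=y_1$. For $t\ge1$: agent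 $A_t$ is shown $(y_t,b_t)$, responds $r(A_t,y_t,b_t)$, is predicted $\hat\ell(r(A_t,y_t,b_t),y_t,b_t)$; $s(A_t,y_t,b_t)$ is appended to $\widetilde{\mathcal{A}}_{t-1}^+$ if $\ell(A_t)=+1$, else to $\widetilde{\mathcal{A}}_{t-1}^-$, giving $\widetilde{\mathcal{A}}_t^\pm$; $s_t^+\in\arg\min_{x\in\widetilde{\mathcal{A}}_t^+}z_t^\top x$, $s_t^-\in\arg\max_{x\in\widetilde{\mathcal{A}}_t^-}z_t^\top x$; $z_{t+1}=\Pi_B(z_t+\gamma_t(s_t^+-s_t^-))$ ($\Pi_B$: Euclidean projection onto the unit $\ell_2$ ball); $y_{t+1}=\sum_{\tau=1}^{t+1}\gamma_\tau z_\tau/\sum_{\tau=1}^{t+1}\gamma_\tau$; $b_{t+1}=-\tfrac12(\min_{x\in\widetilde{\mathcal{A}}_t^+}y_{t+1}^\top x+\max_{x\in\widetilde{\mathcal{A}}_t^-}y_{t+1}^\top x)$. *)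

theory Defs
  imports "HOL-Analysis.Analysis" "HOL-Probability.Probability"
begin

definition sign1 :: "real \<Rightarrow> int" where
  "sign1 x = (if x \<ge> 0 then 1 else -1)"

definition vdir :: "'a::euclidean_space \<Rightarrow> 'a" where
  "vdir y = (if y = 0 then 0 else y /\<^sub>R norm y)"

definition lhat :: "real \<Rightarrow> 'a::euclidean_space \<Rightarrow> 'a \<Rightarrow> real \<Rightarrow> int" where
  "lhat c x y b = sign1 (y \<bullet> x + b - 2 * norm y / c)"

definition resp :: "real \<Rightarrow> 'a::euclidean_space \<Rightarrow> 'a \<Rightarrow> real \<Rightarrow> 'a" where
  "resp c A y b =
     (if y = 0 then A
      else (let q = (y \<bullet> A + b) / norm y in
            if 0 \<le> q \<and> q < 2 / c then A + (2 / c - q) *\<^sub>R vdir y else A))"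

definition proxy :: "('a \<Rightarrow> int) \<Rightarrow> real \<Rightarrow> 'a::euclidean_space \<Rightarrow> 'a \<Rightarrow> real \<Rightarrow> 'a" where
  "proxy lab c A y b =
     (if y = 0 then A
      else (let q = (y \<bullet> A + b) / norm y in
            if 0 \<le> q \<and> q < 2 / c \<and> lab A = -1 then A - q *\<^sub>R vdir y
            else if 0 \<le> q \<and> q < 2 / c \<and> lab A = 1 then A + (2 / c - q) *\<^sub>R vdir y
            else A))"

definition hmarg :: "'a::euclidean_space \<Rightarrow> real \<Rightarrow> 'a set \<Rightarrow> 'a set \<Rightarrow> real" where
  "hmarg y b P M = min (Min ((\<lambda>x. y \<bullet> x + b) ` P)) (Min ((\<lambda>x. - (y \<bullet> x) - b) ` M))"

definition smargin :: "'a::euclidean_space set \<Rightarrow> ('a \<Rightarrow> int) \<Rightarrow> 'a \<Rightarrow> real \<Rightarrow> real" where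
  "smargin AS lab y b = (INF A\<in>AS. of_int (lab A) * (y \<bullet> A + b) / norm y)"

text \<open>Initialization: the agents a 0, ..., a N arrive during initialization, and N is the
  first index at which both label classes have been seen.\<close>
definition both_seen :: "('a \<Rightarrow> int) \<Rightarrow> (nat \<Rightarrow> 'a) \<Rightarrow> nat \<Rightarrow> bool" where
  "both_seen lab a n = ((\<exists>i\<le>n. lab (a i) = 1) \<and> (\<exists>i\<le>n. lab (a i) = -1))"

definition init_stop :: "('a \<Rightarrow> int) \<Rightarrow> (nat \<Rightarrow> 'a) \<Rightarrow> nat \<Rightarrow> bool" where
  "init_stop lab a N = (both_seen lab a N \<and> (\<forall>n<N. \<not> both_seen lab a n))"

text \<open>A~_t^+ and A~_t^- (t \<ge> 0); the agent of round t \<ge> 1 is a (N + t).\<close>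
definition Apos :: "('a::euclidean_space \<Rightarrow> int) \<Rightarrow> real \<Rightarrow> (nat \<Rightarrow> 'a) \<Rightarrow> nat
    \<Rightarrow> (nat \<Rightarrow> 'a) \<Rightarrow> (nat \<Rightarrow> real) \<Rightarrow> nat \<Rightarrow> 'a set" where
  "Apos lab c a N y b t =
     {a i | i. i \<le> N \<and> lab (a i) = 1} \<union>
     {proxy lab c (a (N + \<tau>)) (y \<tau>) (b \<tau>) | \<tau>. 1 \<le> \<tau> \<and> \<tau> \<le> t \<and> lab (a (N + \<tau>)) = 1}"

definition Aneg :: "('a::euclidean_space \<Rightarrow> int) \<Rightarrow> real \<Rightarrow> (nat \<Rightarrow> 'a) \<Rightarrow> nat
    \<Rightarrow> (nat \<Rightarrow> 'a) \<Rightarrow> (nat \<Rightarrow> real) \<Rightarrow> nat \<Rightarrow> 'a set" where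
  "Aneg lab c a N y b t =
     {a i | i. i \<le> N \<and> lab (a i) = -1} \<union>
     {proxy lab c (a (N + \<tau>)) (y \<tau>) (b \<tau>) | \<tau>. 1 \<le> \<tau> \<and> \<tau> \<le> t \<and> lab (a (N + \<tau>)) = -1}"

text \<open>(y_t, b_t, z_t)_{t\<ge>1} is a possible run of the gradient-based SMM algorithm with step
  sizes gamma on the agent stream a (all tie-breaking choices allowed).\<close>
definition smm_run :: "'a::euclidean_space set \<Rightarrow> ('a \<Rightarrow> int) \<Rightarrow> real \<Rightarrow> (nat \<Rightarrow> real)
    \<Rightarrow> (nat \<Rightarrow> 'a) \<Rightarrow> nat \<Rightarrow> (nat \<Rightarrow> 'a) \<Rightarrow> (nat \<Rightarrow> real) \<Rightarrow> (nat \<Rightarrow> 'a) \<Rightarrow> bool" where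
  "smm_run AS lab c \<gamma> a N y b z =
    ((\<forall>i. a i \<in> AS) \<and> init_stop lab a N \<and>
     norm (y 1) \<le> 1 \<and>
     (\<forall>y' b'. norm y' \<le> 1 \<longrightarrow>
        hmarg y' b' (Apos lab c a N y b 0) (Aneg lab c a N y b 0)
          \<le> hmarg (y 1) (b 1) (Apos lab c a N y b 0) (Aneg lab c a N y b 0)) \<and>
     z 1 = y 1 \<and>
     (\<forall>t\<ge>1. \<exists>sp sm.
        sp \<in> Apos lab c a N y b t \<and> (\<forall>x\<in>Apos lab c a N y b t. z t \<bullet> sp \<le> z t \<bullet> x) \<and>
        sm \<in> Aneg lab c a N y b t \<and> (\<forall>x\<in>Aneg lab c a N y b t. z t \<bullet> x \<le> z t \<bullet> sm) \<and>
        z (Suc t) = closest_point (cball 0 1) (z t + \<gamma> t *\<^sub>R (sp - sm))) \<and>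
     (\<forall>t\<ge>1. y (Suc t) = (\<Sum>\<tau>=1..Suc t. \<gamma> \<tau> *\<^sub>R z \<tau>) /\<^sub>R (\<Sum>\<tau>=1..Suc t. \<gamma> \<tau>)) \<and>
     (\<forall>t\<ge>1. b (Suc t) = - (1/2) *
        (Min ((\<lambda>x. y (Suc t) \<bullet> x) ` Apos lab c a N y b t)
         + Max ((\<lambda>x. y (Suc t) \<bullet> x) ` Aneg lab c a N y b t))))"

end

theory Submission
  imports Defs
begin

lemma hmarg_le1:
  assumes "finite P" "finite Q" "p \<in> P" "Q \<noteq> {}"
  shows "hmarg y b P Q \<le> y \<bullet> p + b"
proof -
  have "Min ((\<lambda>x. y \<bullet> x + b) ` P) \<le> y \<bullet> p + b" using assms by (intro Min_le) auto
  thus ?thesis unfolding hmarg_def by linarith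
qed

lemma hmarg_le2:
  assumes "finite P" "finite Q" "n \<in> Q" "P \<noteq> {}"
  shows "hmarg y b P Q \<le> - (y \<bullet> n) - b"
proof -
  have "Min ((\<lambda>x. - (y \<bullet> x) - b) ` Q) \<le> - (y \<bullet> n) - b" using assms by (intro Min_le) auto
  thus ?thesis unfolding hmarg_def by linarith
qed

lemma hmarg_ge:
  assumes "finite P" "finite Q" "P \<noteq> {}" "Q \<noteq> {}"
    and "\<And>p. p \<in> P \<Longrightarrow> k \<le> y \<bullet> p + b" and "\<And>n. n \<in> Q \<Longrightarrow> k \<le> - (y \<bullet> n) - b"
  shows "k \<le> hmarg y b P Q"
  unfolding hmarg_def using assms by (auto simp: Min_ge_iff)

lemma closest_point_ball:
  fixes x :: "'a::euclidean_space"
  shows "closest_point (cball 0 1) x = (if norm x \<le> 1 then x else x /\<^sub>R norm x)"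
proof (cases "norm x \<le> 1")
  case True thus ?thesis by (simp add: closest_point_self)
next
  case False
  hence nx: "norm x > 1" by simp
  have x0: "x \<noteq> 0" using nx by (metis norm_zero not_one_less_zero)
  have "x /\<^sub>R norm x = closest_point (cball 0 1) x"
  proof (rule closest_point_unique)
    have "norm x \<noteq> 0" using nx by linarith
    thus "x /\<^sub>R norm x \<in> cball 0 1" by simp
    show "\<forall>w\<in>cball 0 1. dist x (x /\<^sub>R norm x) \<le> dist x w"
    proof
      fix w :: 'a assume "w \<in> cball 0 1"
      hence w: "norm w \<le> 1" by simp
      have "x - x /\<^sub>R norm x = (1 - 1 / norm x) *\<^sub>R x" by (simp add: algebra_simps divide_inverse)
      moreover have "1 - 1/norm x \<ge> 0" using nx by (simp add: divide_le_eq)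
      ultimately have "dist x (x /\<^sub>R norm x) = (1 - 1/norm x) * norm x"
        by (simp add: dist_norm)
      also have "\<dots> = norm x - 1" using nx x0 by (simp add: field_simps)
      also have "\<dots> \<le> norm x - norm w" using w by simp
      also have "\<dots> \<le> dist x w" by (simp add: dist_norm norm_triangle_ineq2)
      finally show "dist x (x /\<^sub>R norm x) \<le> dist x w" .
    qed
  qed auto
  thus ?thesis using False by simp
qed

lemma proj_nonexp:
  fixes x w :: "'a::euclidean_space"
  assumes "norm w \<le> 1"
  shows "norm (closest_point (cball 0 1) x - w) \<le> norm (x - w)"
proof -
  have "dist (closest_point (cball 0 1) x) (closest_point (cball 0 1) w) \<le> dist x w"
    by (rule closest_point_lipschitz) auto
  moreover have "closest_point (cball 0 1) w = w" using assms by (simp add: closest_point_self)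
  ultimately show ?thesis by (simp add: dist_norm)
qed

lemma proj_in_ball: "norm (closest_point (cball 0 1) (x::'a::euclidean_space)) \<le> 1"
  using closest_point_in_set[of "cball (0::'a) 1" x] by simp

lemma proj_pos:
  fixes x u :: "'a::euclidean_space"
  assumes "u \<bullet> x > 0" shows "u \<bullet> closest_point (cball 0 1) x > 0"
  using assms by (auto simp: closest_point_ball intro!: mult_pos_pos)

lemma proxy_cases:
  fixes A y :: "'a::euclidean_space"
  obtains (same) "proxy lab c A y b = A"
  | (neg) "y \<noteq> 0" "lab A = -1" "0 \<le> (y \<bullet> A + b) / norm y" "(y \<bullet> A + b) / norm y < 2 / c"
      "proxy lab c A y b = A - ((y \<bullet> A + b) / norm y) *\<^sub>R vdir y"
  | (pos) "y \<noteq> 0" "lab A = 1" "0 \<le> (y \<bullet> A + b) / norm y" "(y \<bullet> A + b) / norm y < 2 / c"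
      "proxy lab c A y b = A + (2 / c - (y \<bullet> A + b) / norm y) *\<^sub>R vdir y"
proof -
  let ?q = "(y \<bullet> A + b) / norm y"
  have "proxy lab c A y b = A \<or> (y \<noteq> 0 \<and> lab A = -1 \<and> 0 \<le> ?q \<and> ?q < 2/c \<and> proxy lab c A y b = A - ?q *\<^sub>R vdir y)
     \<or> (y \<noteq> 0 \<and> lab A = 1 \<and> 0 \<le> ?q \<and> ?q < 2/c \<and> proxy lab c A y b = A + (2/c - ?q) *\<^sub>R vdir y)"
    unfolding proxy_def Let_def by auto
  thus ?thesis using that by blast
qed

lemma proxy_norm:
  assumes "c > 0"
  shows "norm (proxy lab c A y b) \<le> norm A + 2 / c"
proof -
  have nv: "norm (vdir y) \<le> 1" by (simp add: vdir_def)
  have k1: "norm (k *\<^sub>R vdir y) \<le> 2 / c" if "0 \<le> k" "k \<le> 2/c" for k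
  proof -
    have "norm (k *\<^sub>R vdir y) = k * norm (vdir y)" using that by simp
    also have "\<dots> \<le> k * 1" using nv that by (intro mult_left_mono) auto
    finally show ?thesis using that by simp
  qed
  show ?thesis
  proof (cases rule: proxy_cases[of lab c A y b])
    case same thus ?thesis using assms by simp
  next
    case neg
    have "norm (A - ((y \<bullet> A + b) / norm y) *\<^sub>R vdir y) \<le> norm A + norm (((y \<bullet> A + b) / norm y) *\<^sub>R vdir y)"
      by (rule norm_triangle_ineq4)
    thus ?thesis using neg k1[of "(y \<bullet> A + b) / norm y"] by simp
  next
    case pos
    have "norm (A + (2 / c - (y \<bullet> A + b) / norm y) *\<^sub>R vdir y) \<le> norm A + norm ((2 / c - (y \<bullet> A + b) / norm y) *\<^sub>R vdir y)"
      by (rule norm_triangle_ineq)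
    thus ?thesis using pos k1[of "2 / c - (y \<bullet> A + b) / norm y"] by simp
  qed
qed

lemma proxy_pos_half:
  fixes u A y :: "'a::euclidean_space"
  assumes "c > 0" "lab A = 1" "d \<le> u \<bullet> A + \<beta>" "u \<bullet> y \<ge> 0"
  shows "d \<le> u \<bullet> proxy lab c A y b + \<beta>"
proof -
  have uv: "u \<bullet> vdir y \<ge> 0" using assms(4) by (simp add: vdir_def)
  show ?thesis
  proof (cases rule: proxy_cases[of lab c A y b])
    case same thus ?thesis using assms by simp
  next
    case neg thus ?thesis using assms by simp
  next
    case pos
    have "0 \<le> (2 / c - (y \<bullet> A + b) / norm y) * (u \<bullet> vdir y)" using pos uv by simp
    thus ?thesis using pos assms by (simp add: inner_add_right)
  qed
qed

lemma proxy_neg_half: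
  fixes u A y :: "'a::euclidean_space"
  assumes "c > 0" "lab A = -1" "u \<bullet> A + \<beta> \<le> -d" "u \<bullet> y \<ge> 0"
  shows "u \<bullet> proxy lab c A y b + \<beta> \<le> -d"
proof -
  have uv: "u \<bullet> vdir y \<ge> 0" using assms(4) by (simp add: vdir_def)
  show ?thesis
  proof (cases rule: proxy_cases[of lab c A y b])
    case same thus ?thesis using assms by simp
  next
    case pos thus ?thesis using assms by simp
  next
    case neg
    have "0 \<le> y \<bullet> A + b" using neg by (simp add: zero_le_divide_iff)
    hence "0 \<le> (y \<bullet> A + b) * (u \<bullet> vdir y) / norm y" using uv by simp
    thus ?thesis using neg assms by (simp add: inner_diff_right)
  qed
qed

locale run =
  fixes AS :: "'a::euclidean_space set" and lab :: "'a \<Rightarrow> int" and c :: real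
    and ys :: 'a and bs :: real and a :: "nat \<Rightarrow> 'a" and N :: nat
    and y :: "nat \<Rightarrow> 'a" and b :: "nat \<Rightarrow> real" and z :: "nat \<Rightarrow> 'a"
  assumes c_pos: "c > 0"
    and labels: "\<forall>A\<in>AS. lab A \<in> {-1, 1}"
    and ys_nz: "ys \<noteq> 0"
    and mmax: "\<forall>y b. y \<noteq> 0 \<longrightarrow> smargin AS lab y b \<le> smargin AS lab ys bs"
    and mpos: "smargin AS lab ys bs > 0"
    and bnd: "bounded AS"
    and run: "smm_run AS lab c (\<lambda>t. 1 / sqrt (real t)) a N y b z"
begin

definition "\<gamma> t = 1 / sqrt (real t)"
definition "d = smargin AS lab ys bs"
definition "u = ys /\<^sub>R norm ys"
definition "\<beta> = bs / norm ys"
abbreviation "P t \<equiv> Apos lab c a N y b t"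
abbreviation "Q t \<equiv> Aneg lab c a N y b t"

lemma d_pos: "d > 0" using mpos by (simp add: d_def)
lemma norm_u: "norm u = 1" using ys_nz by (simp add: u_def)

lemma aAS: "a i \<in> AS" using run by (simp add: smm_run_def)
lemma init: "init_stop lab a N" using run by (simp add: smm_run_def)
lemma y1: "norm (y 1) \<le> 1" using run by (simp add: smm_run_def)
lemma ymax: "norm y' \<le> 1 \<Longrightarrow> hmarg y' b' (P 0) (Q 0) \<le> hmarg (y 1) (b 1) (P 0) (Q 0)"
  using run by (simp add: smm_run_def)
lemma z1: "z 1 = y 1" using run by (simp add: smm_run_def)
lemma step: "t \<ge> 1 \<Longrightarrow> \<exists>sp sm.
        sp \<in> P t \<and> (\<forall>x\<in>P t. z t \<bullet> sp \<le> z t \<bullet> x) \<and>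
        sm \<in> Q t \<and> (\<forall>x\<in>Q t. z t \<bullet> x \<le> z t \<bullet> sm) \<and>
        z (Suc t) = closest_point (cball 0 1) (z t + \<gamma> t *\<^sub>R (sp - sm))"
  using run unfolding smm_run_def \<gamma>_def by blast
lemma yrec: "t \<ge> 1 \<Longrightarrow> y (Suc t) = (\<Sum>\<tau>=1..Suc t. \<gamma> \<tau> *\<^sub>R z \<tau>) /\<^sub>R (\<Sum>\<tau>=1..Suc t. \<gamma> \<tau>)"
  using run unfolding smm_run_def \<gamma>_def by blast
lemma brec: "t \<ge> 1 \<Longrightarrow> b (Suc t) = - (1/2) *
        (Min ((\<lambda>x. y (Suc t) \<bullet> x) ` P t) + Max ((\<lambda>x. y (Suc t) \<bullet> x) ` Q t))"
  using run unfolding smm_run_def by blast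

lemma lab_a: "lab (a i) = 1 \<or> lab (a i) = -1" using labels aAS[of i] by auto

lemma P_mem: "x \<in> P t \<longleftrightarrow> (\<exists>i\<le>N. x = a i \<and> lab (a i) = 1) \<or>
   (\<exists>\<tau>. 1 \<le> \<tau> \<and> \<tau> \<le> t \<and> lab (a (N+\<tau>)) = 1 \<and> x = proxy lab c (a (N+\<tau>)) (y \<tau>) (b \<tau>))"
  unfolding Apos_def by blast
lemma Q_mem: "x \<in> Q t \<longleftrightarrow> (\<exists>i\<le>N. x = a i \<and> lab (a i) = -1) \<or>
   (\<exists>\<tau>. 1 \<le> \<tau> \<and> \<tau> \<le> t \<and> lab (a (N+\<tau>)) = -1 \<and> x = proxy lab c (a (N+\<tau>)) (y \<tau>) (b \<tau>))"
  unfolding Aneg_def by blast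

lemma P_fin: "finite (P t)"
proof -
  have "P t \<subseteq> a ` {..N} \<union> (\<lambda>\<tau>. proxy lab c (a (N+\<tau>)) (y \<tau>) (b \<tau>)) ` {1..t}"
    unfolding Apos_def by auto
  thus ?thesis by (rule finite_subset) auto
qed
lemma Q_fin: "finite (Q t)"
proof -
  have "Q t \<subseteq> a ` {..N} \<union> (\<lambda>\<tau>. proxy lab c (a (N+\<tau>)) (y \<tau>) (b \<tau>)) ` {1..t}"
    unfolding Aneg_def by auto
  thus ?thesis by (rule finite_subset) auto
qed
lemma P_ne: "P t \<noteq> {}"
proof -
  obtain i where "i \<le> N" "lab (a i) = 1" using init unfolding init_stop_def both_seen_def by blast
  thus ?thesis unfolding Apos_def by blast
qed
lemma Q_ne: "Q t \<noteq> {}"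
proof -
  obtain i where "i \<le> N" "lab (a i) = -1" using init unfolding init_stop_def both_seen_def by blast
  thus ?thesis unfolding Aneg_def by blast
qed
lemma P_mono: "t \<le> t' \<Longrightarrow> P t \<subseteq> P t'" unfolding Apos_def by auto
lemma Q_mono: "t \<le> t' \<Longrightarrow> Q t \<subseteq> Q t'" unfolding Aneg_def by auto

definition "R0 = (SOME R. \<forall>A\<in>AS. norm A \<le> R)"
lemma R0: "A \<in> AS \<Longrightarrow> norm A \<le> R0"
proof -
  have "\<exists>R. \<forall>A\<in>AS. norm A \<le> R" using bnd by (auto simp: bounded_iff)
  hence "\<forall>A\<in>AS. norm A \<le> R0" unfolding R0_def by (rule someI_ex)
  thus "A \<in> AS \<Longrightarrow> norm A \<le> R0" by blast
qed

definition "R = R0 + 2 / c"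
lemma R0_nonneg: "R0 \<ge> 0" using R0[OF aAS[of 0]] by (meson norm_ge_zero order.trans)
lemma c2_pos: "2 / c > 0" using c_pos by simp
lemma R_pos: "R > 0" using R0_nonneg c2_pos unfolding R_def by linarith

lemma proxy_bound: "norm (proxy lab c (a i) y' b') \<le> R"
  using proxy_norm[OF c_pos, of lab "a i" y' b'] R0[OF aAS[of i]] by (simp add: R_def)
lemma a_bound: "norm (a i) \<le> R"
  using R0[OF aAS[of i]] c2_pos unfolding R_def by linarith

lemma P_bound: "x \<in> P t \<Longrightarrow> norm x \<le> R"
  unfolding P_mem using proxy_bound a_bound by blast
lemma Q_bound: "x \<in> Q t \<Longrightarrow> norm x \<le> R"
  unfolding Q_mem using proxy_bound a_bound by blast

lemma marg_AS:
  assumes "A \<in> AS"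
  shows "lab A = 1 \<Longrightarrow> d \<le> u \<bullet> A + \<beta>" and "lab A = -1 \<Longrightarrow> u \<bullet> A + \<beta> \<le> -d"
proof -
  let ?f = "\<lambda>A. of_int (lab A) * (ys \<bullet> A + bs) / norm ys"
  have nys: "norm ys > 0" using ys_nz by simp
  have bb: "bdd_below (?f ` AS)"
  proof (rule bdd_belowI2)
    fix A assume A: "A \<in> AS"
    have "\<bar>ys \<bullet> A + bs\<bar> \<le> norm ys * R0 + \<bar>bs\<bar>"
    proof -
      have "\<bar>ys \<bullet> A\<bar> \<le> norm ys * norm A" by (rule Cauchy_Schwarz_ineq2)
      also have "\<dots> \<le> norm ys * R0" using R0[OF A] by (simp add: mult_left_mono)
      finally show ?thesis by linarith
    qed
    moreover have "\<bar>of_int (lab A)\<bar> = (1::real)" using labels A by auto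
    ultimately have "\<bar>of_int (lab A) * (ys \<bullet> A + bs)\<bar> \<le> norm ys * R0 + \<bar>bs\<bar>"
      by (simp add: abs_mult)
    hence "- (norm ys * R0 + \<bar>bs\<bar>) \<le> of_int (lab A) * (ys \<bullet> A + bs)" by linarith
    thus "- (norm ys * R0 + \<bar>bs\<bar>) / norm ys \<le> ?f A" using nys by (simp add: divide_right_mono)
  qed
  have le: "d \<le> ?f A" unfolding d_def smargin_def using bb assms by (rule cINF_lower)
  have eq: "(ys \<bullet> A + bs) / norm ys = u \<bullet> A + \<beta>" unfolding u_def \<beta>_def using nys
    by (simp add: add_divide_distrib divide_inverse algebra_simps)
  show "lab A = 1 \<Longrightarrow> d \<le> u \<bullet> A + \<beta>" using le eq by simp
  have eq2: "(- (ys \<bullet> A) - bs) / norm ys = - ((ys \<bullet> A + bs) / norm ys)" by (simp add: minus_divide_left)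
  show "lab A = -1 \<Longrightarrow> u \<bullet> A + \<beta> \<le> -d" using le eq eq2 by simp
qed

end

context run begin

lemma gamma_pos: "t \<ge> 1 \<Longrightarrow> \<gamma> t > 0" by (simp add: \<gamma>_def)

lemma P0_AS: "x \<in> P 0 \<Longrightarrow> x \<in> AS \<and> lab x = 1"
  unfolding P_mem using aAS by auto
lemma Q0_AS: "x \<in> Q 0 \<Longrightarrow> x \<in> AS \<and> lab x = -1"
  unfolding Q_mem using aAS by auto

lemma u_y1: "u \<bullet> y 1 > 0"
proof (rule ccontr)
  assume neg: "\<not> u \<bullet> y 1 > 0"
  define H where "H = hmarg (y 1) (b 1) (P 0) (Q 0)"
  have hu: "d \<le> hmarg u \<beta> (P 0) (Q 0)"
  proof (rule hmarg_ge[OF P_fin Q_fin P_ne Q_ne])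
    fix p assume "p \<in> P 0" thus "d \<le> u \<bullet> p + \<beta>" using P0_AS marg_AS by blast
  next
    fix n assume "n \<in> Q 0" thus "d \<le> - (u \<bullet> n) - \<beta>" using Q0_AS marg_AS by fastforce
  qed
  have Hd: "d \<le> H" using hu ymax[of u \<beta>] norm_u unfolding H_def by linarith
  have dp: "d > 0" by (rule d_pos)
  hence Hp: "H > 0" using Hd by linarith
  define l where "l = d / (2*d + H)"
  have l_eq: "l * (2*d + H) = d" unfolding l_def using dp Hp by simp
  have l0: "0 < l" unfolding l_def using dp Hp by simp
  have l1: "l < 1" unfolding l_def using dp Hp by simp
  define w where "w = (1 - l) *\<^sub>R y 1 + l *\<^sub>R u"
  define b' where "b' = (1 - l) * b 1 + l * \<beta>"
  define K where "K = (1 - l) * H + l * d"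
  have Kp: "K > 0" unfolding K_def using l0 l1 dp Hp by (simp add: add_pos_pos)
  have hw: "K \<le> hmarg w b' (P 0) (Q 0)"
  proof (rule hmarg_ge[OF P_fin Q_fin P_ne Q_ne])
    fix p assume p: "p \<in> P 0"
    have "H \<le> y 1 \<bullet> p + b 1" unfolding H_def by (rule hmarg_le1[OF P_fin Q_fin p Q_ne])
    moreover have "d \<le> u \<bullet> p + \<beta>" using P0_AS[OF p] marg_AS by blast
    ultimately have "(1-l) * H + l * d \<le> (1-l) * (y 1 \<bullet> p + b 1) + l * (u \<bullet> p + \<beta>)"
      using l0 l1 by (intro add_mono mult_left_mono) auto
    thus "K \<le> w \<bullet> p + b'" unfolding K_def w_def b'_def by (simp add: inner_add_left algebra_simps)
  next
    fix n assume n: "n \<in> Q 0"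
    have "H \<le> - (y 1 \<bullet> n) - b 1" unfolding H_def by (rule hmarg_le2[OF P_fin Q_fin n P_ne])
    moreover have "d \<le> - (u \<bullet> n) - \<beta>" using Q0_AS[OF n] marg_AS by fastforce
    ultimately have "(1-l) * H + l * d \<le> (1-l) * (- (y 1 \<bullet> n) - b 1) + l * (- (u \<bullet> n) - \<beta>)"
      using l0 l1 by (intro add_mono mult_left_mono) auto
    thus "K \<le> - (w \<bullet> n) - b'" unfolding K_def w_def b'_def by (simp add: inner_add_left algebra_simps)
  qed
  have nw2: "(norm w)^2 \<le> (1-l)^2 + l^2"
  proof -
    have "(norm w)^2 = (1-l)^2 * (y 1 \<bullet> y 1) + 2 * ((1-l) * l) * (y 1 \<bullet> u) + l^2 * (u \<bullet> u)"
      unfolding w_def power2_norm_eq_inner by (simp add: inner_add_left inner_add_right inner_commute power2_eq_square algebra_simps)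
    moreover have "y 1 \<bullet> y 1 \<le> 1" using y1 by (simp add: power2_norm_eq_inner[symmetric] power_le_one)
    moreover have "u \<bullet> u = 1" using norm_u by (simp add: power2_norm_eq_inner[symmetric])
    moreover have "(1-l) * l * (y 1 \<bullet> u) \<le> 0" using neg l0 l1
      by (simp add: mult_nonneg_nonpos inner_commute)
    moreover have "(1-l)^2 * (y 1 \<bullet> y 1) \<le> (1-l)^2 * 1" using calculation(2) by (intro mult_left_mono) auto
    ultimately show ?thesis by simp
  qed
  have alg: "K^2 - H^2 * ((1-l)^2 + l^2) = l * H * (2*d - l * (2*d + H)) + l^2 * d^2"
    unfolding K_def by (simp add: power2_eq_square algebra_simps)
  have e2: "2*d - l * (2*d + H) = d" using l_eq by simp
  have "0 < l * H * d" using l0 Hp dp by simp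
  moreover have "0 \<le> l^2 * d^2" by simp
  ultimately have "K^2 - H^2 * ((1-l)^2 + l^2) > 0" unfolding alg e2 by linarith
  moreover have "H^2 * (norm w)^2 \<le> H^2 * ((1-l)^2 + l^2)" using nw2 by (intro mult_left_mono) auto
  ultimately have "(H * norm w)^2 < K^2" by (simp add: power_mult_distrib)
  hence HK: "H * norm w < K" using power_less_imp_less_base[of "H * norm w" 2 K] Kp by linarith
  show False
  proof (cases "w = 0")
    case True
    obtain p where p: "p \<in> P 0" using P_ne by blast
    obtain n where n: "n \<in> Q 0" using Q_ne by blast
    have "hmarg w b' (P 0) (Q 0) \<le> b'" using hmarg_le1[OF P_fin Q_fin p Q_ne[of 0], of w b'] True by simp
    moreover have "hmarg w b' (P 0) (Q 0) \<le> - b'" using hmarg_le2[OF P_fin Q_fin n P_ne[of 0], of w b'] True by simp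
    ultimately show False using hw Kp by linarith
  next
    case False
    hence nwp: "norm w > 0" by simp
    have "K / norm w \<le> hmarg (w /\<^sub>R norm w) (b' / norm w) (P 0) (Q 0)"
    proof (rule hmarg_ge[OF P_fin Q_fin P_ne Q_ne])
      fix p assume p: "p \<in> P 0"
      have "K \<le> w \<bullet> p + b'" using hw hmarg_le1[OF P_fin Q_fin p Q_ne[of 0], of w b'] by linarith
      hence "K / norm w \<le> (w \<bullet> p + b') / norm w" using nwp by (simp add: divide_right_mono)
      thus "K / norm w \<le> (w /\<^sub>R norm w) \<bullet> p + b' / norm w" by (simp add: add_divide_distrib divide_inverse algebra_simps)
    next
      fix n assume n: "n \<in> Q 0"
      have "K \<le> - (w \<bullet> n) - b'" using hw hmarg_le2[OF P_fin Q_fin n P_ne[of 0], of w b'] by linarith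
      hence "K / norm w \<le> (- (w \<bullet> n) - b') / norm w" using nwp by (simp add: divide_right_mono)
      thus "K / norm w \<le> - ((w /\<^sub>R norm w) \<bullet> n) - b' / norm w" by (simp add: diff_divide_distrib divide_inverse algebra_simps)
    qed
    moreover have "hmarg (w /\<^sub>R norm w) (b' / norm w) (P 0) (Q 0) \<le> H"
      unfolding H_def using nwp by (intro ymax) simp
    moreover have "H < K / norm w" using HK nwp by (simp add: field_simps)
    ultimately show False by linarith
  qed
qed

end

context run begin

lemma P_half:
  assumes "\<And>\<tau>. 1 \<le> \<tau> \<Longrightarrow> \<tau> \<le> t \<Longrightarrow> u \<bullet> y \<tau> \<ge> 0" "x \<in> P t"
  shows "d \<le> u \<bullet> x + \<beta>"
  using assms(2) unfolding P_mem
proof (elim disjE exE conjE)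
  fix i assume "i \<le> N" "x = a i" "lab (a i) = 1"
  thus ?thesis using marg_AS(1)[OF aAS] by simp
next
  fix \<tau> assume h: "1 \<le> \<tau>" "\<tau> \<le> t" "lab (a (N+\<tau>)) = 1" "x = proxy lab c (a (N+\<tau>)) (y \<tau>) (b \<tau>)"
  show ?thesis unfolding h(4)
    using c_pos h(3) marg_AS(1)[OF aAS h(3)] assms(1)[OF h(1,2)] by (rule proxy_pos_half)
qed

lemma Q_half:
  assumes "\<And>\<tau>. 1 \<le> \<tau> \<Longrightarrow> \<tau> \<le> t \<Longrightarrow> u \<bullet> y \<tau> \<ge> 0" "x \<in> Q t"
  shows "u \<bullet> x + \<beta> \<le> -d"
  using assms(2) unfolding Q_mem
proof (elim disjE exE conjE)
  fix i assume "i \<le> N" "x = a i" "lab (a i) = -1"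
  thus ?thesis using marg_AS(2)[OF aAS] by simp
next
  fix \<tau> assume h: "1 \<le> \<tau>" "\<tau> \<le> t" "lab (a (N+\<tau>)) = -1" "x = proxy lab c (a (N+\<tau>)) (y \<tau>) (b \<tau>)"
  show ?thesis unfolding h(4)
    using c_pos h(3) marg_AS(2)[OF aAS h(3)] assms(1)[OF h(1,2)] by (rule proxy_neg_half)
qed

lemma y_as_avg: assumes "t \<ge> 1" shows "y t = (\<Sum>\<tau>=1..t. \<gamma> \<tau> *\<^sub>R z \<tau>) /\<^sub>R (\<Sum>\<tau>=1..t. \<gamma> \<tau>)"
proof (cases t)
  case 0 then show ?thesis using assms by simp
next
  case (Suc t')
  show ?thesis
  proof (cases "t' = 0")
    case True thus ?thesis using Suc z1 by (simp add: \<gamma>_def)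
  next
    case False thus ?thesis using Suc yrec[of t'] by simp
  qed
qed

lemma gsum_pos: "t \<ge> 1 \<Longrightarrow> (\<Sum>\<tau>=1..t. \<gamma> \<tau>) > 0"
  by (intro sum_pos) (auto simp: gamma_pos)

lemma y_pos_from_z:
  assumes "t \<ge> 1" "\<And>\<tau>. 1 \<le> \<tau> \<Longrightarrow> \<tau> \<le> t \<Longrightarrow> u \<bullet> z \<tau> > 0"
  shows "u \<bullet> y t > 0"
proof -
  have "u \<bullet> (\<Sum>\<tau>=1..t. \<gamma> \<tau> *\<^sub>R z \<tau>) = (\<Sum>\<tau>=1..t. \<gamma> \<tau> * (u \<bullet> z \<tau>))"
    by (simp add: inner_sum_right)
  also have "\<dots> > 0" using assms gamma_pos by (intro sum_pos) auto
  finally have "u \<bullet> (\<Sum>\<tau>=1..t. \<gamma> \<tau> *\<^sub>R z \<tau>) > 0" .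
  thus ?thesis using y_as_avg[OF assms(1)] gsum_pos[OF assms(1)] by simp
qed

lemma z_pos_all: "\<forall>\<tau>. 1 \<le> \<tau> \<and> \<tau> \<le> t \<longrightarrow> u \<bullet> z \<tau> > 0"
proof (induction t)
  case 0 thus ?case by simp
next
  case (Suc t)
  have "u \<bullet> z (Suc t) > 0"
  proof (cases "t = 0")
    case True thus ?thesis using z1 u_y1 by simp
  next
    case False
    hence t1: "t \<ge> 1" by simp
    have yp: "u \<bullet> y \<tau> \<ge> 0" if "1 \<le> \<tau>" "\<tau> \<le> t" for \<tau>
      using y_pos_from_z[of \<tau>] Suc.IH that by (meson less_imp_le order.trans)
    obtain sp sm where s: "sp \<in> P t" "sm \<in> Q t"
      "z (Suc t) = closest_point (cball 0 1) (z t + \<gamma> t *\<^sub>R (sp - sm))"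
      using step[OF t1] by blast
    have "d \<le> u \<bullet> sp + \<beta>" using P_half[OF yp s(1)] by blast
    moreover have "u \<bullet> sm + \<beta> \<le> -d" using Q_half[OF yp s(2)] by blast
    ultimately have "u \<bullet> sp - u \<bullet> sm > 0" using d_pos by linarith
    hence "\<gamma> t * (u \<bullet> sp - u \<bullet> sm) > 0" using gamma_pos[OF t1] by simp
    moreover have "u \<bullet> z t > 0" using Suc.IH t1 by simp
    ultimately have "u \<bullet> (z t + \<gamma> t *\<^sub>R (sp - sm)) > 0"
      by (simp add: inner_add_right inner_diff_right)
    thus ?thesis unfolding s(3) by (rule proj_pos)
  qed
  thus ?case using Suc.IH by (auto simp: le_Suc_eq)
qed

lemma z_pos: "t \<ge> 1 \<Longrightarrow> u \<bullet> z t > 0" using z_pos_all[of t] by simp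
lemma y_pos: "t \<ge> 1 \<Longrightarrow> u \<bullet> y t > 0" using y_pos_from_z z_pos by simp

lemma P_half': "x \<in> P t \<Longrightarrow> d \<le> u \<bullet> x + \<beta>" using P_half y_pos less_imp_le by blast
lemma Q_half': "x \<in> Q t \<Longrightarrow> u \<bullet> x + \<beta> \<le> -d" using Q_half y_pos less_imp_le by blast

lemma z_ball: "t \<ge> 1 \<Longrightarrow> norm (z t) \<le> 1"
proof (induction t rule: nat_induct_at_least)
  case base thus ?case using z1 y1 by simp
next
  case (Suc t)
  then obtain sp sm where "z (Suc t) = closest_point (cball 0 1) (z t + \<gamma> t *\<^sub>R (sp - sm))"
    using step by blast
  thus ?case using proj_in_ball by simp
qed

end

lemma net_approx:
  fixes S :: "nat \<Rightarrow> 'a::euclidean_space set"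
  assumes bU: "bounded (\<Union>t. S t)" and mono: "\<And>t t'. t \<le> t' \<Longrightarrow> S t \<subseteq> S t'" and dp: "\<delta> > 0"
  shows "\<exists>T0. \<forall>t\<ge>T0. \<forall>x\<in>(\<Union>t. S t). \<exists>x'\<in>S t. dist x x' < \<delta>"
proof -
  let ?U = "\<Union>t. S t"
  have cpt: "compact (closure ?U)" using bU by (simp add: compact_closure)
  have cov: "closure ?U \<subseteq> (\<Union>x\<in>?U. ball x \<delta>)"
  proof
    fix p assume "p \<in> closure ?U"
    then obtain x where "x \<in> ?U" "dist x p < \<delta>" using dp closure_approachable by blast
    thus "p \<in> (\<Union>x\<in>?U. ball x \<delta>)" by auto
  qed
  obtain C where C: "C \<subseteq> ?U" "finite C" "closure ?U \<subseteq> (\<Union>x\<in>C. ball x \<delta>)"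
    using compactE_image[OF cpt _ cov] by blast
  define tx where "tx x = (SOME t. x \<in> S t)" for x
  have tx: "x \<in> S (tx x)" if "x \<in> C" for x
    using C(1) that unfolding tx_def by (metis (mono_tags, lifting) UN_iff someI_ex subsetD)
  define T0 where "T0 = Max (insert 0 (tx ` C))"
  have "tx x \<le> T0" if "x \<in> C" for x unfolding T0_def using C(2) that by (intro Max_ge) auto
  hence inS: "x \<in> S t" if "x \<in> C" "t \<ge> T0" for x t using tx mono that by (meson order.trans subsetD)
  show ?thesis
  proof (intro exI allI impI ballI)
    fix t x assume t: "t \<ge> T0" and x: "x \<in> ?U"
    then obtain c where "c \<in> C" "x \<in> ball c \<delta>" using C(3) closure_subset by blast
    thus "\<exists>x'\<in>S t. dist x x' < \<delta>" using inS[OF _ t] by (auto simp: dist_commute)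
  qed
qed

lemma sum_isqrt_ge: "T \<ge> 1 \<Longrightarrow> (\<Sum>t=1..T. 1 / sqrt (real t)) \<ge> sqrt (real T)"
proof -
  assume T: "T \<ge> 1"
  have "\<forall>t\<in>{1..T}. 1 / sqrt (real T) \<le> 1 / sqrt (real t)"
    by (auto intro!: divide_left_mono mult_pos_pos)
  hence "real (card {1..T}) * (1 / sqrt (real T)) \<le> (\<Sum>t=1..T. 1 / sqrt (real t))"
    by (intro sum_bounded_below) blast
  moreover have "real (card {1..T}) * (1 / sqrt (real T)) = sqrt (real T)"
    using T by (simp add: real_div_sqrt)
  ultimately show ?thesis by simp
qed

lemma cesaro_w:
  fixes a :: "nat \<Rightarrow> real" and C :: real
  assumes ev: "\<And>\<epsilon>. \<epsilon> > 0 \<Longrightarrow> \<exists>T. \<forall>t\<ge>T. a t \<le> \<epsilon>" and ep: "\<epsilon> > 0"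
  shows "\<exists>T. \<forall>T'\<ge>T. (C + (\<Sum>t=1..T'. (1 / sqrt (real t)) * a t)) / (\<Sum>t=1..T'. 1 / sqrt (real t)) \<le> \<epsilon>"
proof -
  define g where "g t = 1 / sqrt (real t)" for t :: nat
  have g0: "g t \<ge> 0" for t by (simp add: g_def)
  obtain T0 where T0: "\<forall>t\<ge>T0. a t \<le> \<epsilon>/2" using ev[of "\<epsilon>/2"] ep by auto
  define C0 where "C0 = (\<Sum>t=1..T0. g t * \<bar>a t\<bar>)"
  define K where "K = 2 * max (C + C0) 0 / \<epsilon>"
  have K0: "K \<ge> 0" unfolding K_def using ep by simp
  define T where "T = max T0 (max 1 (nat \<lceil>K^2\<rceil>))"
  show ?thesis
  proof (intro exI allI impI)
    fix T' assume TT: "T' \<ge> T"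
    hence T1: "T' \<ge> 1" and T0': "T' \<ge> T0" and TK: "real T' \<ge> K^2" unfolding T_def by (auto simp: nat_le_iff ceiling_le_iff)
    define S where "S = (\<Sum>t=1..T'. g t)"
    have S_ge: "S \<ge> sqrt (real T')" unfolding S_def g_def by (rule sum_isqrt_ge[OF T1])
    have "sqrt (real T') \<ge> K" using TK K0 by (metis real_sqrt_abs real_sqrt_le_mono abs_of_nonneg)
    hence SK: "S \<ge> K" using S_ge by linarith
    have Spos: "S > 0" using S_ge T1 by (metis less_le_trans of_nat_0_less_iff real_sqrt_gt_zero le_neq_implies_less zero_less_one not_one_le_zero not_le)
    have hterm: "g t * a t \<le> (if t \<le> T0 then g t * \<bar>a t\<bar> else 0) + g t * (\<epsilon>/2)" if "t \<in> {1..T'}" for t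
    proof (cases "t \<le> T0")
      case True
      have "g t * a t \<le> g t * \<bar>a t\<bar>" using g0 by (simp add: mult_left_mono)
      moreover have "0 \<le> g t * (\<epsilon>/2)" using g0 ep by simp
      ultimately show ?thesis using True by simp
    next
      case False
      hence "a t \<le> \<epsilon>/2" using T0 by simp
      hence "g t * a t \<le> g t * (\<epsilon>/2)" using g0 by (intro mult_left_mono) auto
      thus ?thesis using False by simp
    qed
    have "(\<Sum>t=1..T'. g t * a t) \<le> (\<Sum>t=1..T'. (if t \<le> T0 then g t * \<bar>a t\<bar> else 0) + g t * (\<epsilon>/2))"
      by (rule sum_mono) (rule hterm)
    also have "\<dots> = (\<Sum>t=1..T'. (if t \<le> T0 then g t * \<bar>a t\<bar> else 0)) + (\<epsilon>/2) * S"
      unfolding S_def by (simp add: sum.distrib sum_distrib_left mult.commute)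
    also have "(\<Sum>t=1..T'. (if t \<le> T0 then g t * \<bar>a t\<bar> else 0)) = C0"
    proof -
      have "(\<Sum>t=1..T'. (if t \<le> T0 then g t * \<bar>a t\<bar> else 0)) = (\<Sum>t\<in>{1..T'} \<inter> {t. t \<le> T0}. g t * \<bar>a t\<bar>)"
        by (simp add: sum.inter_restrict)
      also have "{1..T'} \<inter> {t. t \<le> T0} = {1..T0}" using T0' by auto
      finally show ?thesis unfolding C0_def .
    qed
    finally have sa: "(\<Sum>t=1..T'. g t * a t) \<le> C0 + (\<epsilon>/2) * S" .
    have "C + C0 \<le> (\<epsilon>/2) * S"
    proof -
      have "(\<epsilon>/2) * K = max (C + C0) 0" unfolding K_def using ep by simp
      moreover have "(\<epsilon>/2) * K \<le> (\<epsilon>/2) * S" using SK ep by simp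
      ultimately show ?thesis by linarith
    qed
    hence "C + (\<Sum>t=1..T'. g t * a t) \<le> \<epsilon> * S" using sa by linarith
    hence "(C + (\<Sum>t=1..T'. g t * a t)) / S \<le> \<epsilon>" using Spos by (simp add: divide_le_eq)
    thus "(C + (\<Sum>t=1..T'. (1 / sqrt (real t)) * a t)) / (\<Sum>t=1..T'. 1 / sqrt (real t)) \<le> \<epsilon>"
      unfolding S_def g_def by simp
  qed
qed

context run begin

definition "UPs = (\<Union>t. P t)"
definition "UNs = (\<Union>t. Q t)"
definition "W = {p - n | p n. p \<in> UPs \<and> n \<in> UNs}"
definition "F zz = Inf ((\<lambda>w. zz \<bullet> w) ` W)"

lemma aux_quarter: "(x::real) = (p1 + p2)/2 - p3/4 \<Longrightarrow> p1 \<le> 1 \<Longrightarrow> p2 \<le> 1 \<Longrightarrow> 0 < p3 \<Longrightarrow> x < 1"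
  by (simp add: field_simps)

lemma UP_bound: "x \<in> UPs \<Longrightarrow> norm x \<le> R" unfolding UPs_def using P_bound by blast
lemma UN_bound: "x \<in> UNs \<Longrightarrow> norm x \<le> R" unfolding UNs_def using Q_bound by blast
lemma UP_ne: "UPs \<noteq> {}" unfolding UPs_def using P_ne by blast
lemma UN_ne: "UNs \<noteq> {}" unfolding UNs_def using Q_ne by blast
lemma W_ne: "W \<noteq> {}" unfolding W_def using UP_ne UN_ne by blast
lemma W_bound: "w \<in> W \<Longrightarrow> norm w \<le> 2 * R"
proof -
  assume "w \<in> W"
  then obtain p n where "w = p - n" "p \<in> UPs" "n \<in> UNs" unfolding W_def by blast
  thus ?thesis using UP_bound UN_bound norm_triangle_ineq4[of p n] by force
qed

lemma inner_bound: "\<bar>zz \<bullet> w\<bar> \<le> norm zz * norm w" by (rule Cauchy_Schwarz_ineq2)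

lemma F_bdd: "bdd_below ((\<lambda>w. zz \<bullet> w) ` W)"
proof (rule bdd_belowI2)
  fix w assume "w \<in> W"
  hence "norm zz * norm w \<le> norm zz * (2*R)" using W_bound by (simp add: mult_left_mono)
  thus "- (norm zz * (2*R)) \<le> zz \<bullet> w" using inner_bound[of zz w] by linarith
qed

lemma F_le: "w \<in> W \<Longrightarrow> F zz \<le> zz \<bullet> w" unfolding F_def by (rule cInf_lower) (auto intro: F_bdd)
lemma F_ge: "(\<And>w. w \<in> W \<Longrightarrow> k \<le> zz \<bullet> w) \<Longrightarrow> k \<le> F zz"
  unfolding F_def using W_ne by (intro cInf_greatest) auto

lemma F_lip: "F zz \<le> F zz' + 2 * R * norm (zz - zz')"
proof -
  have "F zz - 2 * R * norm (zz - zz') \<le> zz' \<bullet> w" if "w \<in> W" for w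
  proof -
    have "\<bar>(zz - zz') \<bullet> w\<bar> \<le> norm (zz - zz') * (2 * R)"
      using inner_bound[of "zz - zz'" w] W_bound[OF that] by (meson mult_left_mono norm_ge_zero order.trans)
    moreover have "F zz \<le> zz \<bullet> w" using F_le[OF that] .
    ultimately show ?thesis by (simp add: inner_diff_left algebra_simps)
  qed
  hence "F zz - 2 * R * norm (zz - zz') \<le> F zz'" by (rule F_ge)
  thus ?thesis by linarith
qed

lemma F_cont: "continuous_on S F"
  unfolding continuous_on_iff
proof (intro ballI allI impI)
  fix x e assume e: "(e::real) > 0"
  show "\<exists>\<delta>>0. \<forall>x'\<in>S. dist x' x < \<delta> \<longrightarrow> dist (F x') (F x) < e"
  proof (intro exI conjI ballI impI)
    show "e / (2*R + 1) > 0" using e R_pos by simp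
    fix x' assume "dist x' x < e / (2*R+1)"
    hence nd: "norm (x' - x) * (2*R+1) < e" using R_pos by (simp add: dist_norm field_simps)
    have "F x' \<le> F x + 2*R*norm (x' - x)" by (rule F_lip)
    moreover have "F x \<le> F x' + 2*R*norm (x - x')" by (rule F_lip)
    moreover have "norm (x - x') = norm (x' - x)" by (rule norm_minus_commute)
    moreover have "2*R*norm (x' - x) \<le> norm (x' - x) * (2*R+1)" by (simp add: algebra_simps)
    ultimately show "dist (F x') (F x) < e" using nd by (simp add: dist_real_def abs_le_iff)
  qed
qed

lemma F_scale: "s > 0 \<Longrightarrow> s * F zz \<le> F (s *\<^sub>R zz)"
  by (rule F_ge) (simp add: F_le mult_left_mono)

lemma F_mid: "(F z1 + F z2) / 2 \<le> F ((1/2) *\<^sub>R (z1 + z2))"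
proof (rule F_ge)
  fix w assume "w \<in> W"
  hence "F z1 \<le> z1 \<bullet> w" "F z2 \<le> z2 \<bullet> w" using F_le by auto
  thus "(F z1 + F z2) / 2 \<le> ((1/2) *\<^sub>R (z1 + z2)) \<bullet> w" by (simp add: inner_add_left)
qed

lemma F_zero: "F 0 \<le> 0"
proof -
  obtain w where "w \<in> W" using W_ne by blast
  from F_le[OF this, of 0] show ?thesis by simp
qed

lemma F_u: "2 * d \<le> F u"
proof (rule F_ge)
  fix w assume "w \<in> W"
  then obtain p n where "w = p - n" "p \<in> UPs" "n \<in> UNs" unfolding W_def by blast
  moreover have "d \<le> u \<bullet> p + \<beta>" if "p \<in> UPs" for p using that P_half' unfolding UPs_def by blast
  moreover have "u \<bullet> n + \<beta> \<le> -d" if "n \<in> UNs" for n using that Q_half' unfolding UNs_def by blast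
  ultimately show "2 * d \<le> u \<bullet> w" by (force simp: inner_diff_right)
qed

end

context run begin

definition "yinf = (SOME v. v \<in> cball 0 1 \<and> (\<forall>v'\<in>cball 0 1. F v' \<le> F v))"
lemma yinf: "norm yinf \<le> 1" "\<And>v'. norm v' \<le> 1 \<Longrightarrow> F v' \<le> F yinf"
proof -
  have "\<exists>v\<in>cball 0 1. \<forall>v'\<in>cball 0 1. F v' \<le> F v"
    by (rule continuous_attains_sup) (auto intro: F_cont)
  then obtain v0 where "v0 \<in> cball 0 1 \<and> (\<forall>v'\<in>cball 0 1. F v' \<le> F v0)" by blast
  hence "yinf \<in> cball 0 1 \<and> (\<forall>v'\<in>cball 0 1. F v' \<le> F yinf)" unfolding yinf_def by (rule someI)
  thus "norm yinf \<le> 1" "\<And>v'. norm v' \<le> 1 \<Longrightarrow> F v' \<le> F yinf" by auto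
qed

definition "M = F yinf"
lemma M_ge: "2 * d \<le> M" unfolding M_def using F_u yinf(2)[of u] norm_u by linarith
lemma M_pos: "M > 0" using M_ge d_pos by linarith

lemma yinf_unique: assumes "norm v \<le> 1" "F v \<ge> M" shows "v = yinf"
proof (rule ccontr)
  assume ne: "v \<noteq> yinf"
  define m where "m = (1/2) *\<^sub>R (v + yinf)"
  have h1: "(F v + F yinf)/2 \<le> F m" using F_mid[of v yinf] unfolding m_def .
  have "M \<le> (F v + F yinf)/2" using assms(2) unfolding M_def by simp
  hence Fm: "M \<le> F m" using h1 by linarith
  have "(norm m)^2 < 1"
  proof -
    have e1: "(norm (v + yinf))^2 = v \<bullet> v + 2 * (v \<bullet> yinf) + yinf \<bullet> yinf"
      unfolding power2_norm_eq_inner by (simp add: inner_add_left inner_add_right inner_commute[of yinf v])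
    have e2: "(norm (v - yinf))^2 = v \<bullet> v - 2 * (v \<bullet> yinf) + yinf \<bullet> yinf"
      unfolding power2_norm_eq_inner by (simp add: inner_diff_left inner_diff_right inner_commute[of yinf v])
    have e3: "(norm m)^2 = (norm (v + yinf))^2 / 4" unfolding m_def by (simp add: power2_eq_square)
    have "(norm m)^2 = ((norm v)^2 + (norm yinf)^2) / 2 - (norm (v - yinf))^2 / 4"
      unfolding e3 e1 e2 power2_norm_eq_inner[of v] power2_norm_eq_inner[of yinf] by (simp add: field_simps)
    moreover have "(norm v)^2 \<le> 1" using assms(1) by (simp add: power_le_one)
    moreover have "(norm yinf)^2 \<le> 1" using yinf(1) by (simp add: power_le_one)
    moreover have "(norm (v - yinf))^2 > 0" using ne by simp
    ultimately show ?thesis by (rule aux_quarter)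
  qed
  hence nm1: "norm m < 1" by (simp add: power_less_one_iff abs_square_less_1)
  have m0: "m \<noteq> 0" using Fm F_zero M_pos by auto
  hence nmp: "norm m > 0" by simp
  have "(1 / norm m) * F m \<le> F ((1 / norm m) *\<^sub>R m)" using nmp by (intro F_scale) simp
  moreover have "F ((1 / norm m) *\<^sub>R m) \<le> M" unfolding M_def using nmp by (intro yinf(2)) simp
  moreover have "M < (1 / norm m) * M" using nm1 nmp M_pos by (simp add: field_simps)
  moreover have "(1 / norm m) * M \<le> (1 / norm m) * F m" using Fm nmp by (intro mult_left_mono) auto
  ultimately show False by linarith
qed

lemma yinf_norm: "norm yinf = 1"
proof (rule ccontr)
  assume "norm yinf \<noteq> 1"
  hence nm1: "norm yinf < 1" using yinf(1) by simp
  have m0: "yinf \<noteq> 0" using F_zero M_pos unfolding M_def by auto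
  hence nmp: "norm yinf > 0" by simp
  have "(1 / norm yinf) * F yinf \<le> F ((1 / norm yinf) *\<^sub>R yinf)" using nmp by (intro F_scale) simp
  moreover have "F ((1 / norm yinf) *\<^sub>R yinf) \<le> M" unfolding M_def using nmp by (intro yinf(2)) simp
  moreover have "M < (1 / norm yinf) * M" using nm1 nmp M_pos by (simp add: field_simps)
  ultimately show False unfolding M_def by linarith
qed

lemma yinf_sep: "\<epsilon> > 0 \<Longrightarrow> \<exists>\<eta>>0. \<forall>v. norm v \<le> 1 \<and> F v > M - \<eta> \<longrightarrow> norm (v - yinf) < \<epsilon>"
proof -
  assume ep: "\<epsilon> > 0"
  define K where "K = cball 0 1 \<inter> {v. \<epsilon> \<le> norm (v - yinf)}"
  have cK: "compact K" unfolding K_def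
  proof (rule compact_Int_closed)
    show "closed {v. \<epsilon> \<le> norm (v - yinf)}"
      by (intro closed_Collect_le continuous_intros)
  qed simp
  show ?thesis
  proof (cases "K = {}")
    case True
    show ?thesis
    proof (intro exI[of _ 1] conjI allI impI)
      fix v assume "norm v \<le> 1 \<and> M - 1 < F v"
      hence "v \<in> cball 0 1" by simp
      hence "v \<notin> {v. \<epsilon> \<le> norm (v - yinf)}" using True unfolding K_def by blast
      thus "norm (v - yinf) < \<epsilon>" by simp
    qed simp
  next
    case False
    obtain v0 where v0: "v0 \<in> K" "\<forall>v\<in>K. F v \<le> F v0"
      using continuous_attains_sup[OF cK False F_cont] by blast
    have "F v0 < M"
    proof (rule ccontr)
      assume "\<not> F v0 < M"
      hence "v0 = yinf" using v0(1) by (intro yinf_unique) (auto simp: K_def)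
      thus False using v0(1) ep by (auto simp: K_def)
    qed
    show ?thesis
    proof (intro exI[of _ "M - F v0"] conjI allI impI)
      show "M - F v0 > 0" using \<open>F v0 < M\<close> by simp
      fix v assume "norm v \<le> 1 \<and> M - (M - F v0) < F v"
      hence v: "norm v \<le> 1" "F v0 < F v" by auto
      show "norm (v - yinf) < \<epsilon>"
      proof (rule ccontr)
        assume "\<not> norm (v - yinf) < \<epsilon>"
        hence "v \<in> K" using v(1) by (simp add: K_def)
        thus False using v0(2) v(2) by force
      qed
    qed
  qed
qed

end

context run begin

definition "gg t = (SOME g. \<exists>sp sm. g = sp - sm \<and> sp \<in> P t \<and> (\<forall>x\<in>P t. z t \<bullet> sp \<le> z t \<bullet> x) \<and>
   sm \<in> Q t \<and> (\<forall>x\<in>Q t. z t \<bullet> x \<le> z t \<bullet> sm) \<and> z (Suc t) = closest_point (cball 0 1) (z t + \<gamma> t *\<^sub>R g))"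

lemma gg_prop: assumes "t \<ge> 1"
  shows "\<exists>sp sm. gg t = sp - sm \<and> sp \<in> P t \<and> (\<forall>x\<in>P t. z t \<bullet> sp \<le> z t \<bullet> x) \<and>
   sm \<in> Q t \<and> (\<forall>x\<in>Q t. z t \<bullet> x \<le> z t \<bullet> sm) \<and> z (Suc t) = closest_point (cball 0 1) (z t + \<gamma> t *\<^sub>R gg t)"
proof -
  obtain sp sm where h: "sp \<in> P t" "(\<forall>x\<in>P t. z t \<bullet> sp \<le> z t \<bullet> x)" "sm \<in> Q t"
    "(\<forall>x\<in>Q t. z t \<bullet> x \<le> z t \<bullet> sm)" "z (Suc t) = closest_point (cball 0 1) (z t + \<gamma> t *\<^sub>R (sp - sm))"
    using step[OF assms] by blast
  have "\<exists>g. \<exists>sp sm. g = sp - sm \<and> sp \<in> P t \<and> (\<forall>x\<in>P t. z t \<bullet> sp \<le> z t \<bullet> x) \<and>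
   sm \<in> Q t \<and> (\<forall>x\<in>Q t. z t \<bullet> x \<le> z t \<bullet> sm) \<and> z (Suc t) = closest_point (cball 0 1) (z t + \<gamma> t *\<^sub>R g)"
    using h by blast
  from someI_ex[OF this] show ?thesis unfolding gg_def[symmetric] by blast
qed

lemma gamma_nonneg: "\<gamma> t \<ge> 0" by (simp add: \<gamma>_def)

lemma gg_W: assumes "t \<ge> 1" shows "gg t \<in> W"
proof -
  obtain sp sm where h: "gg t = sp - sm" "sp \<in> P t" "sm \<in> Q t" using gg_prop[OF assms] by blast
  have "sp \<in> UPs" "sm \<in> UNs" using h unfolding UPs_def UNs_def by blast+
  thus ?thesis unfolding W_def h(1) by blast
qed
lemma gg_bound: "t \<ge> 1 \<Longrightarrow> norm (gg t) \<le> 2 * R" by (rule W_bound[OF gg_W])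
lemma gg_min: "t \<ge> 1 \<Longrightarrow> p \<in> P t \<Longrightarrow> n \<in> Q t \<Longrightarrow> z t \<bullet> gg t \<le> z t \<bullet> (p - n)"
proof -
  assume "t \<ge> 1" "p \<in> P t" "n \<in> Q t"
  then obtain sp sm where "gg t = sp - sm" "\<forall>x\<in>P t. z t \<bullet> sp \<le> z t \<bullet> x" "\<forall>x\<in>Q t. z t \<bullet> x \<le> z t \<bullet> sm"
    using gg_prop[of t] by blast
  thus ?thesis using \<open>p \<in> P t\<close> \<open>n \<in> Q t\<close> by (force simp: inner_diff_right)
qed
lemma gg_z: assumes "t \<ge> 1" shows "z (Suc t) = closest_point (cball 0 1) (z t + \<gamma> t *\<^sub>R gg t)"
proof -
  obtain sp sm where "z (Suc t) = closest_point (cball 0 1) (z t + \<gamma> t *\<^sub>R gg t)" using gg_prop[OF assms] by blast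
  thus ?thesis .
qed

lemma regret_step:
  assumes t: "t \<ge> 1" and w0: "norm w0 \<le> 1"
  shows "2 * \<gamma> t * (gg t \<bullet> w0 - gg t \<bullet> z t) - 4 * R^2 * (\<gamma> t)^2 \<le> (norm (z t - w0))^2 - (norm (z (Suc t) - w0))^2"
proof -
  define g where "g = gg t"
  define e where "e = z t - w0"
  have h0: "norm (z (Suc t) - w0) \<le> norm (z t + \<gamma> t *\<^sub>R g - w0)"
    unfolding gg_z[OF t] g_def by (rule proj_nonexp[OF w0])
  have eq: "z t + \<gamma> t *\<^sub>R g - w0 = e + \<gamma> t *\<^sub>R g" unfolding e_def by simp
  have h1: "norm (z (Suc t) - w0) \<le> norm (e + \<gamma> t *\<^sub>R g)" using h0 unfolding eq .
  have A: "(norm (z (Suc t) - w0))^2 \<le> (norm (e + \<gamma> t *\<^sub>R g))^2"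
    by (rule power_mono[OF h1 norm_ge_zero])
  have B: "(norm (e + \<gamma> t *\<^sub>R g))^2 = (norm e)^2 + 2 * \<gamma> t * (g \<bullet> e) + (\<gamma> t)^2 * (norm g)^2"
    unfolding power2_norm_eq_inner by (simp add: inner_add_left inner_add_right inner_commute[of g e] power2_eq_square algebra_simps)
  have "(norm g)^2 \<le> (2*R)^2" using gg_bound[OF t] unfolding g_def by (intro power_mono) auto
  hence C0: "(\<gamma> t)^2 * (norm g)^2 \<le> (\<gamma> t)^2 * (2*R)^2" by (rule mult_left_mono) simp
  have C1: "(\<gamma> t)^2 * (2*R)^2 = 4 * R^2 * (\<gamma> t)^2" by (simp add: power2_eq_square)
  have C: "(\<gamma> t)^2 * (norm g)^2 \<le> 4 * R^2 * (\<gamma> t)^2" using C0 C1 by linarith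
  have D: "2 * \<gamma> t * (g \<bullet> e) = 2 * \<gamma> t * (gg t \<bullet> z t) - 2 * \<gamma> t * (gg t \<bullet> w0)"
    unfolding g_def e_def by (simp add: inner_diff_right algebra_simps)
  have E: "2 * \<gamma> t * (gg t \<bullet> w0 - gg t \<bullet> z t) = 2 * \<gamma> t * (gg t \<bullet> w0) - 2 * \<gamma> t * (gg t \<bullet> z t)"
    by (simp add: algebra_simps)
  show ?thesis unfolding E e_def[symmetric] using A B C D by linarith
qed

lemma regret_sum:
  assumes w0: "norm w0 \<le> 1"
  shows "(\<Sum>t=1..T. 2 * \<gamma> t * (gg t \<bullet> w0 - gg t \<bullet> z t) - 4 * R^2 * (\<gamma> t)^2)
     \<le> (norm (z 1 - w0))^2 - (norm (z (Suc T) - w0))^2"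
proof (induction T)
  case 0 thus ?case by simp
next
  case (Suc T)
  have "(\<Sum>t=1..Suc T. 2 * \<gamma> t * (gg t \<bullet> w0 - gg t \<bullet> z t) - 4 * R^2 * (\<gamma> t)^2)
     = (\<Sum>t=1..T. 2 * \<gamma> t * (gg t \<bullet> w0 - gg t \<bullet> z t) - 4 * R^2 * (\<gamma> t)^2)
       + (2 * \<gamma> (Suc T) * (gg (Suc T) \<bullet> w0 - gg (Suc T) \<bullet> z (Suc T)) - 4 * R^2 * (\<gamma> (Suc T))^2)"
    by simp
  also have "\<dots> \<le> ((norm (z 1 - w0))^2 - (norm (z (Suc T) - w0))^2)
      + ((norm (z (Suc T) - w0))^2 - (norm (z (Suc (Suc T)) - w0))^2)"
    using Suc.IH regret_step[OF _ w0, of "Suc T"] by (intro add_mono) auto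
  finally show ?case by simp
qed

lemma y_ball: "t \<ge> 1 \<Longrightarrow> norm (y t) \<le> 1"
proof -
  assume t: "t \<ge> 1"
  have "norm (\<Sum>\<tau>=1..t. \<gamma> \<tau> *\<^sub>R z \<tau>) \<le> (\<Sum>\<tau>=1..t. norm (\<gamma> \<tau> *\<^sub>R z \<tau>))" by (rule norm_sum)
  also have "\<dots> \<le> (\<Sum>\<tau>=1..t. \<gamma> \<tau>)"
  proof (rule sum_mono)
    fix \<tau> assume "\<tau> \<in> {1..t}"
    hence "\<gamma> \<tau> > 0" "norm (z \<tau>) \<le> 1" using gamma_pos z_ball by auto
    thus "norm (\<gamma> \<tau> *\<^sub>R z \<tau>) \<le> \<gamma> \<tau>" by (simp add: mult_left_le)
  qed
  finally have "norm (\<Sum>\<tau>=1..t. \<gamma> \<tau> *\<^sub>R z \<tau>) / (\<Sum>\<tau>=1..t. \<gamma> \<tau>) \<le> 1"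
    using gsum_pos[OF t] by (simp add: divide_le_eq)
  moreover have "norm (y t) = norm (\<Sum>\<tau>=1..t. \<gamma> \<tau> *\<^sub>R z \<tau>) / (\<Sum>\<tau>=1..t. \<gamma> \<tau>)"
    using y_as_avg[OF t] gsum_pos[OF t] by (simp add: divide_inverse mult.commute)
  ultimately show ?thesis by simp
qed

lemma F_avg: assumes t: "t \<ge> 1"
  shows "(\<Sum>\<tau>=1..t. \<gamma> \<tau> * F (z \<tau>)) / (\<Sum>\<tau>=1..t. \<gamma> \<tau>) \<le> F (y t)"
proof (rule F_ge)
  fix w assume w: "w \<in> W"
  have "(\<Sum>\<tau>=1..t. \<gamma> \<tau> * F (z \<tau>)) \<le> (\<Sum>\<tau>=1..t. \<gamma> \<tau> * (z \<tau> \<bullet> w))"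
    using F_le[OF w] gamma_nonneg by (intro sum_mono mult_left_mono) auto
  also have "\<dots> = (\<Sum>\<tau>=1..t. \<gamma> \<tau> *\<^sub>R z \<tau>) \<bullet> w" by (simp add: inner_sum_left)
  finally have "(\<Sum>\<tau>=1..t. \<gamma> \<tau> * F (z \<tau>)) / (\<Sum>\<tau>=1..t. \<gamma> \<tau>) \<le> ((\<Sum>\<tau>=1..t. \<gamma> \<tau> *\<^sub>R z \<tau>) \<bullet> w) / (\<Sum>\<tau>=1..t. \<gamma> \<tau>)"
    using gsum_pos[OF t] by (simp add: divide_right_mono)
  also have "\<dots> = y t \<bullet> w" using y_as_avg[OF t] by (simp add: divide_inverse mult.commute)
  finally show "(\<Sum>\<tau>=1..t. \<gamma> \<tau> * F (z \<tau>)) / (\<Sum>\<tau>=1..t. \<gamma> \<tau>) \<le> y t \<bullet> w" .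
qed

end

context run begin

lemma UPs_bounded: "bounded (\<Union>t. P t)"
  unfolding bounded_iff using P_bound by blast
lemma UNs_bounded: "bounded (\<Union>t. Q t)"
  unfolding bounded_iff using Q_bound by blast

lemma netP: "\<delta> > 0 \<Longrightarrow> \<exists>T0. \<forall>t\<ge>T0. \<forall>x\<in>UPs. \<exists>x'\<in>P t. dist x x' < \<delta>"
  unfolding UPs_def by (rule net_approx[OF UPs_bounded P_mono])
lemma netQ: "\<delta> > 0 \<Longrightarrow> \<exists>T0. \<forall>t\<ge>T0. \<forall>x\<in>UNs. \<exists>x'\<in>Q t. dist x x' < \<delta>"
  unfolding UNs_def by (rule net_approx[OF UNs_bounded Q_mono])

lemma e_bound:
  assumes dp: "\<delta> > 0"
  shows "\<exists>T0. \<forall>t\<ge>T0. gg t \<bullet> z t - F (z t) \<le> 2 * \<delta>"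
proof -
  obtain T1 where T1: "\<forall>t\<ge>T1. \<forall>x\<in>UPs. \<exists>x'\<in>P t. dist x x' < \<delta>" using netP[OF dp] by blast
  obtain T2 where T2: "\<forall>t\<ge>T2. \<forall>x\<in>UNs. \<exists>x'\<in>Q t. dist x x' < \<delta>" using netQ[OF dp] by blast
  show ?thesis
  proof (intro exI[of _ "max 1 (max T1 T2)"] allI impI)
    fix t assume t: "max 1 (max T1 T2) \<le> t"
    hence t1: "t \<ge> 1" by simp
    have nz: "norm (z t) \<le> 1" using z_ball[OF t1] .
    have "gg t \<bullet> z t - 2 * \<delta> \<le> z t \<bullet> w" if w: "w \<in> W" for w
    proof -
      obtain p n where pn: "w = p - n" "p \<in> UPs" "n \<in> UNs" using w unfolding W_def by blast
      obtain p' where p': "p' \<in> P t" "dist p p' < \<delta>" using T1 pn(2) t by force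
      obtain n' where n': "n' \<in> Q t" "dist n n' < \<delta>" using T2 pn(3) t by force
      have "z t \<bullet> gg t \<le> z t \<bullet> (p' - n')" by (rule gg_min[OF t1 p'(1) n'(1)])
      also have "z t \<bullet> (p' - n') = z t \<bullet> w + z t \<bullet> (p' - p) - z t \<bullet> (n' - n)"
        unfolding pn(1) by (simp add: inner_diff_right)
      also have "z t \<bullet> (p' - p) \<le> \<delta>"
      proof -
        have "z t \<bullet> (p' - p) \<le> \<bar>z t \<bullet> (p' - p)\<bar>" by simp
        also have "\<dots> \<le> norm (z t) * norm (p' - p)" by (rule Cauchy_Schwarz_ineq2)
        also have "\<dots> \<le> 1 * \<delta>" using nz p'(2) by (intro mult_mono) (auto simp: dist_norm norm_minus_commute)
        finally show ?thesis by simp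
      qed
      also have "- (z t \<bullet> (n' - n)) \<le> \<delta>"
      proof -
        have "- (z t \<bullet> (n' - n)) \<le> \<bar>z t \<bullet> (n' - n)\<bar>" by simp
        also have "\<dots> \<le> norm (z t) * norm (n' - n)" by (rule Cauchy_Schwarz_ineq2)
        also have "\<dots> \<le> 1 * \<delta>" using nz n'(2) by (intro mult_mono) (auto simp: dist_norm norm_minus_commute)
        finally show ?thesis by simp
      qed
      hence "z t \<bullet> w + \<delta> - z t \<bullet> (n' - n) \<le> z t \<bullet> w + \<delta> + \<delta>" by simp
      finally show ?thesis by (simp add: inner_commute)
    qed
    hence "gg t \<bullet> z t - 2 * \<delta> \<le> F (z t)" by (rule F_ge)
    thus "gg t \<bullet> z t - F (z t) \<le> 2 * \<delta>" by simp
  qed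
qed

lemma regret_bound:
  assumes T: "T \<ge> 1"
  shows "(\<Sum>t=1..T. \<gamma> t * (M - F (z t))) \<le> 2 + (\<Sum>t=1..T. \<gamma> t * (2 * R^2 * \<gamma> t + (gg t \<bullet> z t - F (z t))))"
proof -
  have rs: "(\<Sum>t=1..T. 2 * \<gamma> t * (gg t \<bullet> yinf - gg t \<bullet> z t) - 4 * R^2 * (\<gamma> t)^2)
     \<le> (norm (z 1 - yinf))^2 - (norm (z (Suc T) - yinf))^2" by (rule regret_sum[OF yinf(1)])
  have "norm (z 1 - yinf) \<le> 2"
    using norm_triangle_ineq4[of "z 1" yinf] z_ball[of 1] yinf(1) by simp
  hence "(norm (z 1 - yinf))^2 \<le> 2^2" by (intro power_mono) auto
  hence s4: "(\<Sum>t=1..T. 2 * \<gamma> t * (gg t \<bullet> yinf - gg t \<bullet> z t) - 4 * R^2 * (\<gamma> t)^2) \<le> 4"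
    using rs zero_le_power2[of "norm (z (Suc T) - yinf)"] power2_eq_square[of "2::real"] by linarith
  have termw: "\<gamma> t * (M - F (z t)) \<le> (1/2) * (2 * \<gamma> t * (gg t \<bullet> yinf - gg t \<bullet> z t) - 4 * R^2 * (\<gamma> t)^2)
      + \<gamma> t * (2 * R^2 * \<gamma> t + (gg t \<bullet> z t - F (z t)))" if t: "t \<in> {1..T}" for t
  proof -
    have t1: "t \<ge> 1" using t by simp
    have "M \<le> yinf \<bullet> gg t" unfolding M_def by (rule F_le[OF gg_W[OF t1]])
    hence "\<gamma> t * M \<le> \<gamma> t * (gg t \<bullet> yinf)" using gamma_nonneg by (simp add: inner_commute mult_left_mono)
    thus ?thesis by (simp add: algebra_simps power2_eq_square)
  qed
  have "(\<Sum>t=1..T. \<gamma> t * (M - F (z t))) \<le> (\<Sum>t=1..T. (1/2) * (2 * \<gamma> t * (gg t \<bullet> yinf - gg t \<bullet> z t) - 4 * R^2 * (\<gamma> t)^2)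
      + \<gamma> t * (2 * R^2 * \<gamma> t + (gg t \<bullet> z t - F (z t))))"
    by (rule sum_mono) (rule termw)
  also have "\<dots> = (1/2) * (\<Sum>t=1..T. 2 * \<gamma> t * (gg t \<bullet> yinf - gg t \<bullet> z t) - 4 * R^2 * (\<gamma> t)^2)
      + (\<Sum>t=1..T. \<gamma> t * (2 * R^2 * \<gamma> t + (gg t \<bullet> z t - F (z t))))"
    by (simp add: sum.distrib sum_distrib_left)
  finally show ?thesis using s4 by linarith
qed

lemma gamma_small: "\<epsilon> > 0 \<Longrightarrow> \<exists>T. \<forall>t\<ge>T. 2 * R^2 * \<gamma> t \<le> \<epsilon>"
proof -
  assume ep: "\<epsilon> > 0"
  define K where "K = 2 * R^2 / \<epsilon>"
  have K0: "K > 0" unfolding K_def using ep R_pos by simp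
  show ?thesis
  proof (intro exI[of _ "nat \<lceil>K^2\<rceil> + 1"] allI impI)
    fix t assume t: "nat \<lceil>K^2\<rceil> + 1 \<le> t"
    hence "real t \<ge> K^2" by linarith
    hence "sqrt (real t) \<ge> K" using K0 by (metis real_sqrt_abs real_sqrt_le_mono abs_of_nonneg less_imp_le)
    moreover have tp: "sqrt (real t) > 0" using t by simp
    ultimately have "2 * R^2 / sqrt (real t) \<le> 2 * R^2 / K" using K0 R_pos by (intro divide_left_mono) auto
    also have "\<dots> = \<epsilon>" unfolding K_def using ep R_pos by simp
    finally show "2 * R^2 * \<gamma> t \<le> \<epsilon>" by (simp add: \<gamma>_def)
  qed
qed

lemma F_conv: "\<epsilon> > 0 \<Longrightarrow> \<exists>T. \<forall>T'\<ge>T. M - F (y T') \<le> \<epsilon>"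
proof -
  assume ep: "\<epsilon> > 0"
  define aa where "aa t = 2 * R^2 * \<gamma> t + (gg t \<bullet> z t - F (z t))" for t
  have ev: "\<exists>T. \<forall>t\<ge>T. aa t \<le> e" if e: "e > 0" for e
  proof -
    obtain T1 where T1: "\<forall>t\<ge>T1. 2 * R^2 * \<gamma> t \<le> e/2" using gamma_small[of "e/2"] e by auto
    obtain T2 where T2: "\<forall>t\<ge>T2. gg t \<bullet> z t - F (z t) \<le> 2 * (e/4)" using e_bound[of "e/4"] e by auto
    show ?thesis using T1 T2 by (intro exI[of _ "max T1 T2"]) (force simp: aa_def)
  qed
  obtain T where T: "\<forall>T'\<ge>T. (2 + (\<Sum>t=1..T'. (1 / sqrt (real t)) * aa t)) / (\<Sum>t=1..T'. 1 / sqrt (real t)) \<le> \<epsilon>"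
    using cesaro_w[of aa \<epsilon> 2] ev ep by blast
  show ?thesis
  proof (intro exI[of _ "max T 1"] allI impI)
    fix T' assume T': "max T 1 \<le> T'"
    hence T1: "T' \<ge> 1" by simp
    define S where "S = (\<Sum>t=1..T'. \<gamma> t)"
    have Sp: "S > 0" unfolding S_def by (rule gsum_pos[OF T1])
    have "M - F (y T') \<le> M - (\<Sum>t=1..T'. \<gamma> t * F (z t)) / S"
      using F_avg[OF T1] unfolding S_def by simp
    also have "\<dots> = (\<Sum>t=1..T'. \<gamma> t * (M - F (z t))) / S"
      using Sp unfolding S_def by (simp add: sum_subtractf right_diff_distrib sum_distrib_left[symmetric] sum_distrib_right field_simps)
    also have "\<dots> \<le> (2 + (\<Sum>t=1..T'. \<gamma> t * aa t)) / S"
      using regret_bound[OF T1] Sp unfolding aa_def by (intro divide_right_mono) auto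
    also have "\<dots> \<le> \<epsilon>" using T T' unfolding S_def \<gamma>_def by simp
    finally show "M - F (y T') \<le> \<epsilon>" .
  qed
qed

lemma y_conv: "y \<longlonglongrightarrow> yinf"
proof (rule LIMSEQ_I)
  fix r :: real assume r: "r > 0"
  obtain \<eta> where eta: "\<eta> > 0" "\<forall>v. norm v \<le> 1 \<and> F v > M - \<eta> \<longrightarrow> norm (v - yinf) < r"
    using yinf_sep[OF r] by blast
  obtain T where T: "\<forall>T'\<ge>T. M - F (y T') \<le> \<eta>/2" using F_conv[of "\<eta>/2"] eta(1) by auto
  show "\<exists>no. \<forall>n\<ge>no. norm (y n - yinf) < r"
  proof (intro exI[of _ "max T 1"] allI impI)
    fix n assume n: "max T 1 \<le> n"
    hence "norm (y n) \<le> 1" using y_ball by simp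
    moreover have "F (y n) > M - \<eta>" using T n eta(1) by force
    ultimately show "norm (y n - yinf) < r" using eta(2) by blast
  qed
qed

end

lemma min_conv:
  fixes S :: "nat \<Rightarrow> 'a::euclidean_space set" and f :: "nat \<Rightarrow> 'a"
  assumes fin: "\<And>t. finite (S t)" and ne: "\<And>t. S t \<noteq> {}" and sub: "\<And>t. S t \<subseteq> U"
    and bndU: "\<And>x. x \<in> U \<Longrightarrow> norm x \<le> R" and Rp: "R > 0" and nv: "norm v = 1"
    and net: "\<And>\<delta>. \<delta> > 0 \<Longrightarrow> \<exists>T. \<forall>t\<ge>T. \<forall>x\<in>U. \<exists>x'\<in>S t. dist x x' < \<delta>"
    and f: "f \<longlonglongrightarrow> v"
  shows "(\<lambda>t. Min ((\<lambda>x. f t \<bullet> x) ` S t)) \<longlonglongrightarrow> Inf ((\<lambda>x. v \<bullet> x) ` U)"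
proof (rule LIMSEQ_I)
  fix r :: real assume r: "r > 0"
  let ?m = "Inf ((\<lambda>x. v \<bullet> x) ` U)"
  have Une: "U \<noteq> {}" using ne sub by blast
  have bb: "bdd_below ((\<lambda>x. v \<bullet> x) ` U)"
  proof (rule bdd_belowI2)
    fix x assume "x \<in> U"
    hence "\<bar>v \<bullet> x\<bar> \<le> R" using Cauchy_Schwarz_ineq2[of v x] bndU nv by (metis mult_1 order.trans)
    thus "- R \<le> v \<bullet> x" by linarith
  qed
  have close: "\<bar>f t \<bullet> x - v \<bullet> x\<bar> \<le> R * norm (f t - v)" if "x \<in> U" for t x
  proof -
    have "\<bar>f t \<bullet> x - v \<bullet> x\<bar> = \<bar>(f t - v) \<bullet> x\<bar>" by (simp add: inner_diff_left)
    also have "\<dots> \<le> norm (f t - v) * norm x" by (rule Cauchy_Schwarz_ineq2)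
    also have "\<dots> \<le> norm (f t - v) * R" using bndU[OF that] by (simp add: mult_left_mono)
    finally show ?thesis by (simp add: mult.commute)
  qed
  obtain T1 where T1: "\<forall>t\<ge>T1. \<forall>x\<in>U. \<exists>x'\<in>S t. dist x x' < r/4" using net[of "r/4"] r by auto
  have "\<forall>\<^sub>F t in sequentially. dist (f t) v < r / (4 * R)" using f r Rp by (intro tendstoD) auto
  then obtain T2 where T2: "\<forall>t\<ge>T2. norm (f t - v) < r / (4 * R)" unfolding eventually_sequentially dist_norm by blast
  obtain x0 where x0: "x0 \<in> U" "v \<bullet> x0 < ?m + r/4"
  proof -
    have "?m < ?m + r/4" using r by simp
    then obtain w where "w \<in> (\<lambda>x. v \<bullet> x) ` U" "w < ?m + r/4" using cInf_less_iff[OF _ bb] Une by blast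
    thus ?thesis using that by blast
  qed
  show "\<exists>no. \<forall>n\<ge>no. norm (Min ((\<lambda>x. f n \<bullet> x) ` S n) - ?m) < r"
  proof (intro exI[of _ "max T1 T2"] allI impI)
    fix t assume t: "max T1 T2 \<le> t"
    have eR: "R * norm (f t - v) < r/4" using T2 t Rp by (simp add: field_simps)
    have lo: "?m - r/4 < Min ((\<lambda>x. f t \<bullet> x) ` S t)"
    proof -
      have "\<forall>x\<in>S t. ?m - r/4 < f t \<bullet> x"
      proof
        fix x assume x: "x \<in> S t"
        hence xU: "x \<in> U" using sub by blast
        have "?m \<le> v \<bullet> x" using bb xU by (intro cInf_lower) auto
        thus "?m - r/4 < f t \<bullet> x" using close[OF xU, of t] eR by linarith
      qed
      thus ?thesis using fin ne by (simp add: Min_gr_iff)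
    qed
    obtain x' where x': "x' \<in> S t" "dist x0 x' < r/4" using T1 t x0(1) by force
    have h1: "Min ((\<lambda>x. f t \<bullet> x) ` S t) \<le> f t \<bullet> x'" using fin x'(1) by (intro Min_le) auto
    have h2: "f t \<bullet> x' \<le> v \<bullet> x' + r/4" using close[of x' t] x'(1) sub eR by force
    have h3: "v \<bullet> x' \<le> v \<bullet> x0 + r/4"
    proof -
      have "\<bar>v \<bullet> x' - v \<bullet> x0\<bar> = \<bar>v \<bullet> (x' - x0)\<bar>" by (simp add: inner_diff_right)
      also have "\<dots> \<le> norm v * norm (x' - x0)" by (rule Cauchy_Schwarz_ineq2)
      also have "\<dots> < r/4" using x'(2) nv by (simp add: dist_norm norm_minus_commute)
      finally show ?thesis by linarith
    qed
    have hi: "Min ((\<lambda>x. f t \<bullet> x) ` S t) < ?m + r" using h1 h2 h3 x0(2) r by linarith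
    show "norm (Min ((\<lambda>x. f t \<bullet> x) ` S t) - ?m) < r" using lo hi r by simp
  qed
qed

lemma max_conv:
  fixes S :: "nat \<Rightarrow> 'a::euclidean_space set" and f :: "nat \<Rightarrow> 'a"
  assumes fin: "\<And>t. finite (S t)" and ne: "\<And>t. S t \<noteq> {}" and sub: "\<And>t. S t \<subseteq> U"
    and bndU: "\<And>x. x \<in> U \<Longrightarrow> norm x \<le> R" and Rp: "R > 0" and nv: "norm v = 1"
    and net: "\<And>\<delta>. \<delta> > 0 \<Longrightarrow> \<exists>T. \<forall>t\<ge>T. \<forall>x\<in>U. \<exists>x'\<in>S t. dist x x' < \<delta>"
    and f: "f \<longlonglongrightarrow> v"
  shows "(\<lambda>t. Max ((\<lambda>x. f t \<bullet> x) ` S t)) \<longlonglongrightarrow> Sup ((\<lambda>x. v \<bullet> x) ` U)"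
proof (rule LIMSEQ_I)
  fix r :: real assume r: "r > 0"
  let ?m = "Sup ((\<lambda>x. v \<bullet> x) ` U)"
  have Une: "U \<noteq> {}" using ne sub by blast
  have bb: "bdd_above ((\<lambda>x. v \<bullet> x) ` U)"
  proof (rule bdd_aboveI2)
    fix x assume "x \<in> U"
    hence "\<bar>v \<bullet> x\<bar> \<le> R" using Cauchy_Schwarz_ineq2[of v x] bndU nv by (metis mult_1 order.trans)
    thus "v \<bullet> x \<le> R" by linarith
  qed
  have close: "\<bar>f t \<bullet> x - v \<bullet> x\<bar> \<le> R * norm (f t - v)" if "x \<in> U" for t x
  proof -
    have "\<bar>f t \<bullet> x - v \<bullet> x\<bar> = \<bar>(f t - v) \<bullet> x\<bar>" by (simp add: inner_diff_left)
    also have "\<dots> \<le> norm (f t - v) * norm x" by (rule Cauchy_Schwarz_ineq2)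
    also have "\<dots> \<le> norm (f t - v) * R" using bndU[OF that] by (simp add: mult_left_mono)
    finally show ?thesis by (simp add: mult.commute)
  qed
  obtain T1 where T1: "\<forall>t\<ge>T1. \<forall>x\<in>U. \<exists>x'\<in>S t. dist x x' < r/4" using net[of "r/4"] r by auto
  have "\<forall>\<^sub>F t in sequentially. dist (f t) v < r / (4 * R)" using f r Rp by (intro tendstoD) auto
  then obtain T2 where T2: "\<forall>t\<ge>T2. norm (f t - v) < r / (4 * R)" unfolding eventually_sequentially dist_norm by blast
  obtain x0 where x0: "x0 \<in> U" "?m - r/4 < v \<bullet> x0"
  proof -
    have "?m - r/4 < ?m" using r by simp
    then obtain w where "w \<in> (\<lambda>x. v \<bullet> x) ` U" "?m - r/4 < w" using less_cSup_iff[OF _ bb] Une by blast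
    thus ?thesis using that by blast
  qed
  show "\<exists>no. \<forall>n\<ge>no. norm (Max ((\<lambda>x. f n \<bullet> x) ` S n) - ?m) < r"
  proof (intro exI[of _ "max T1 T2"] allI impI)
    fix t assume t: "max T1 T2 \<le> t"
    have eR: "R * norm (f t - v) < r/4" using T2 t Rp by (simp add: field_simps)
    have hi: "Max ((\<lambda>x. f t \<bullet> x) ` S t) < ?m + r/4"
    proof -
      have "\<forall>x\<in>S t. f t \<bullet> x < ?m + r/4"
      proof
        fix x assume x: "x \<in> S t"
        hence xU: "x \<in> U" using sub by blast
        have "v \<bullet> x \<le> ?m" using bb xU by (intro cSup_upper) auto
        thus "f t \<bullet> x < ?m + r/4" using close[OF xU, of t] eR by linarith
      qed
      thus ?thesis using fin ne by (simp add: Max_less_iff)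
    qed
    obtain x' where x': "x' \<in> S t" "dist x0 x' < r/4" using T1 t x0(1) by force
    have h3: "v \<bullet> x0 - r/4 \<le> v \<bullet> x'"
    proof -
      have "\<bar>v \<bullet> x' - v \<bullet> x0\<bar> = \<bar>v \<bullet> (x' - x0)\<bar>" by (simp add: inner_diff_right)
      also have "\<dots> \<le> norm v * norm (x' - x0)" by (rule Cauchy_Schwarz_ineq2)
      also have "\<dots> < r/4" using x'(2) nv by (simp add: dist_norm norm_minus_commute)
      finally show ?thesis by linarith
    qed
    have h2: "v \<bullet> x' - r/4 \<le> f t \<bullet> x'" using close[of x' t] x'(1) sub eR by force
    have h1: "f t \<bullet> x' \<le> Max ((\<lambda>x. f t \<bullet> x) ` S t)" using fin x'(1) by (intro Max_ge) auto
    have lo: "?m - r < Max ((\<lambda>x. f t \<bullet> x) ` S t)" using h1 h2 h3 x0(2) r by linarith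
    show "norm (Max ((\<lambda>x. f t \<bullet> x) ` S t) - ?m) < r" using lo hi r by simp
  qed
qed

lemma inner_vdir: "y \<noteq> 0 \<Longrightarrow> y \<bullet> vdir y = norm y"
  by (simp add: vdir_def power2_norm_eq_inner[symmetric] power2_eq_square)

lemma mistake_char:
  fixes A y :: "'a::euclidean_space"
  assumes c: "c > 0" and lA: "lab A = 1 \<or> lab A = -1"
    and mis: "lhat c (resp c A y b) y b \<noteq> lab A"
  shows "(lab A = 1 \<and> y \<bullet> proxy lab c A y b + b < 0) \<or> (lab A = -1 \<and> y \<bullet> proxy lab c A y b + b \<ge> 0)"
proof (cases "y = 0")
  case True
  hence "resp c A y b = A" "proxy lab c A y b = A" by (simp_all add: resp_def proxy_def)
  thus ?thesis using mis lA True by (auto simp: lhat_def sign1_def split: if_splits)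
next
  case False
  define q where "q = (y \<bullet> A + b) / norm y"
  have ny: "norm y > 0" using False by simp
  have yq: "y \<bullet> A + b = q * norm y" unfolding q_def using ny by simp
  show ?thesis
  proof (cases "0 \<le> q \<and> q < 2 / c")
    case True
    have r: "resp c A y b = A + (2/c - q) *\<^sub>R vdir y" using False True unfolding resp_def q_def Let_def by simp
    have "y \<bullet> resp c A y b + b - 2 * norm y / c = 0"
      unfolding r using False yq by (simp add: inner_add_right inner_vdir algebra_simps)
    hence "lhat c (resp c A y b) y b = 1" by (simp add: lhat_def sign1_def)
    hence la: "lab A = -1" using mis lA by auto
    have pe: "proxy lab c A y b = A - q *\<^sub>R vdir y" using False True la unfolding proxy_def q_def Let_def by simp
    have "y \<bullet> (A - q *\<^sub>R vdir y) + b = (y \<bullet> A + b) - q * norm y" by (simp add: inner_diff_right inner_vdir[OF False])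
    hence "y \<bullet> proxy lab c A y b + b = 0" unfolding pe using yq by simp
    thus ?thesis using la by simp
  next
    case nr: False
    have r: "resp c A y b = A" using False nr unfolding resp_def q_def Let_def by auto
    have p: "proxy lab c A y b = A" using False nr unfolding proxy_def q_def Let_def by auto
    have lh: "lhat c A y b = sign1 (y \<bullet> A + b - 2 * norm y / c)" by (simp add: lhat_def)
    show ?thesis
    proof (cases "lab A = 1")
      case True
      hence "y \<bullet> A + b - 2 * norm y / c < 0" using mis r lh by (auto simp: sign1_def split: if_splits)
      hence "q * norm y < (2 / c) * norm y" using yq by simp
      hence "q < 2 / c" using mult_less_cancel_right_pos[OF ny] by blast
      hence "q < 0" using nr by simp
      hence "y \<bullet> A + b < 0" using yq ny by (simp add: mult_neg_pos)
      thus ?thesis using True p by simp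
    next
      case False
      hence la: "lab A = -1" using lA by simp
      hence "y \<bullet> A + b - 2 * norm y / c \<ge> 0" using mis r lh by (auto simp: sign1_def split: if_splits)
      moreover have "2 * norm y / c \<ge> 0" using c by simp
      ultimately have "y \<bullet> A + b \<ge> 0" by linarith
      thus ?thesis using la p by simp
    qed
  qed
qed

lemma moved_char:
  fixes A y :: "'a::euclidean_space"
  assumes c: "c > 0" and mv: "resp c A y b \<noteq> A" and la: "lab A = 1"
  shows "y \<noteq> 0 \<and> y \<bullet> proxy lab c A y b + b = 2 * norm y / c"
proof -
  have y0: "y \<noteq> 0" using mv by (auto simp: resp_def)
  define q where "q = (y \<bullet> A + b) / norm y"
  have ny: "norm y > 0" using y0 by simp
  have yq: "y \<bullet> A + b = q * norm y" unfolding q_def using ny by simp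
  have rng: "0 \<le> q \<and> q < 2 / c" using mv y0 unfolding resp_def q_def Let_def by (auto split: if_splits)
  have pe: "proxy lab c A y b = A + (2/c - q) *\<^sub>R vdir y" using y0 rng la unfolding proxy_def q_def Let_def by simp
  have "y \<bullet> (A + (2/c - q) *\<^sub>R vdir y) + b = (y \<bullet> A + b) + (2/c - q) * norm y" by (simp add: inner_add_right inner_vdir[OF y0])
  hence "y \<bullet> proxy lab c A y b + b = 2 * norm y / c" unfolding pe using yq by (simp add: algebra_simps)
  thus ?thesis using y0 by simp
qed

lemma unmoved_proxy:
  fixes A y :: "'a::euclidean_space"
  assumes c: "c > 0" and nm: "resp c A y b = A"
  shows "proxy lab c A y b = A"
proof (cases "y = 0")
  case True thus ?thesis by (simp add: proxy_def)
next
  case False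
  define q where "q = (y \<bullet> A + b) / norm y"
  show ?thesis
  proof (cases "0 \<le> q \<and> q < 2 / c")
    case True
    have "resp c A y b = A + (2/c - q) *\<^sub>R vdir y" using False True unfolding resp_def q_def Let_def by simp
    hence "(2/c - q) *\<^sub>R vdir y = 0" using nm by simp
    moreover have "vdir y \<noteq> 0" using False by (simp add: vdir_def)
    moreover have "2/c - q \<noteq> 0" using True by simp
    ultimately show ?thesis by simp
  next
    case nr: False
    thus ?thesis using False unfolding proxy_def q_def Let_def by auto
  qed
qed

context run begin

definition "mP = Inf ((\<lambda>x. yinf \<bullet> x) ` UPs)"
definition "MQ = Sup ((\<lambda>x. yinf \<bullet> x) ` UNs)"
definition "binf = - (1/2) * (mP + MQ)"
definition "D = (mP - MQ) / 2"

lemma bbP: "bdd_below ((\<lambda>x. v \<bullet> x) ` UPs)"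
proof (rule bdd_belowI2)
  fix x assume "x \<in> UPs"
  hence "\<bar>v \<bullet> x\<bar> \<le> norm v * R" using Cauchy_Schwarz_ineq2[of v x] UP_bound
    by (meson mult_left_mono norm_ge_zero order.trans)
  thus "- (norm v * R) \<le> v \<bullet> x" by linarith
qed
lemma baQ: "bdd_above ((\<lambda>x. v \<bullet> x) ` UNs)"
proof (rule bdd_aboveI2)
  fix x assume "x \<in> UNs"
  hence "\<bar>v \<bullet> x\<bar> \<le> norm v * R" using Cauchy_Schwarz_ineq2[of v x] UN_bound
    by (meson mult_left_mono norm_ge_zero order.trans)
  thus "v \<bullet> x \<le> norm v * R" by linarith
qed

lemma mP_le: "x \<in> UPs \<Longrightarrow> mP \<le> yinf \<bullet> x" unfolding mP_def by (rule cInf_lower) (auto intro: bbP)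
lemma MQ_ge: "x \<in> UNs \<Longrightarrow> yinf \<bullet> x \<le> MQ" unfolding MQ_def by (rule cSup_upper) (auto intro: baQ)

lemma M_le_gap: "M \<le> mP - MQ"
proof -
  have "MQ \<le> yinf \<bullet> p - M" if p: "p \<in> UPs" for p
  proof -
    have "yinf \<bullet> n \<le> yinf \<bullet> p - M" if n: "n \<in> UNs" for n
    proof -
      have "p - n \<in> W" using p n unfolding W_def by blast
      hence "M \<le> yinf \<bullet> (p - n)" unfolding M_def by (rule F_le)
      thus ?thesis by (simp add: inner_diff_right)
    qed
    thus ?thesis unfolding MQ_def using UN_ne by (intro cSup_least) auto
  qed
  hence "MQ + M \<le> mP" unfolding mP_def using UP_ne
    by (intro cInf_greatest) (auto simp: algebra_simps)
  thus ?thesis by simp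
qed

lemma D_ge: "d \<le> D" unfolding D_def using M_le_gap M_ge by simp
lemma D_pos: "D > 0" using D_ge d_pos by simp

lemma Db1: "yinf \<bullet> x + binf - D = yinf \<bullet> x - mP" unfolding D_def binf_def by (simp add: field_simps)
lemma Db2: "yinf \<bullet> x + binf + D = yinf \<bullet> x - MQ" unfolding D_def binf_def by (simp add: field_simps)
lemma margin_P: "x \<in> UPs \<Longrightarrow> D \<le> yinf \<bullet> x + binf"
  using mP_le[of x] Db1[of x] by linarith
lemma margin_Q: "x \<in> UNs \<Longrightarrow> yinf \<bullet> x + binf \<le> - D"
  using MQ_ge[of x] Db2[of x] by linarith

lemma b_conv: "b \<longlonglongrightarrow> binf"
proof -
  have ys: "(\<lambda>t. y (Suc t)) \<longlonglongrightarrow> yinf" by (rule LIMSEQ_Suc[OF y_conv])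
  have m1: "(\<lambda>t. Min ((\<lambda>x. y (Suc t) \<bullet> x) ` P t)) \<longlonglongrightarrow> mP"
    unfolding mP_def
    by (rule min_conv[OF P_fin P_ne _ UP_bound R_pos yinf_norm netP ys]) (auto simp: UPs_def)
  have m2: "(\<lambda>t. Max ((\<lambda>x. y (Suc t) \<bullet> x) ` Q t)) \<longlonglongrightarrow> MQ"
    unfolding MQ_def
    by (rule max_conv[OF Q_fin Q_ne _ UN_bound R_pos yinf_norm netQ ys]) (auto simp: UNs_def)
  have "(\<lambda>t. - (1/2) * (Min ((\<lambda>x. y (Suc t) \<bullet> x) ` P t) + Max ((\<lambda>x. y (Suc t) \<bullet> x) ` Q t))) \<longlonglongrightarrow> binf"
    unfolding binf_def by (intro tendsto_intros m1 m2)
  moreover have "eventually (\<lambda>t. - (1/2) * (Min ((\<lambda>x. y (Suc t) \<bullet> x) ` P t) + Max ((\<lambda>x. y (Suc t) \<bullet> x) ` Q t)) = b (Suc t)) sequentially"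
    unfolding eventually_sequentially by (intro exI[of _ 1]) (simp add: brec)
  ultimately have "(\<lambda>t. b (Suc t)) \<longlonglongrightarrow> binf" by (rule Lim_transform_eventually)
  thus ?thesis by (rule LIMSEQ_imp_Suc)
qed

lemma ev_close: "\<rho> > 0 \<Longrightarrow> \<exists>T. \<forall>t\<ge>T. norm (y t - yinf) < \<rho> \<and> \<bar>b t - binf\<bar> < \<rho>"
proof -
  assume r: "\<rho> > 0"
  have "\<forall>\<^sub>F t in sequentially. dist (y t) yinf < \<rho>" using y_conv r by (rule tendstoD)
  moreover have "\<forall>\<^sub>F t in sequentially. dist (b t) binf < \<rho>" using b_conv r by (rule tendstoD)
  ultimately have "\<forall>\<^sub>F t in sequentially. dist (y t) yinf < \<rho> \<and> dist (b t) binf < \<rho>" by (rule eventually_conj)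
  then obtain T where T: "\<forall>t\<ge>T. dist (y t) yinf < \<rho> \<and> dist (b t) binf < \<rho>"
    unfolding eventually_sequentially by blast
  show ?thesis
  proof (intro exI[of _ T] allI impI)
    fix t assume "T \<le> t"
    hence "dist (y t) yinf < \<rho>" "dist (b t) binf < \<rho>" using T by auto
    thus "norm (y t - yinf) < \<rho> \<and> \<bar>b t - binf\<bar> < \<rho>" by (simp add: dist_norm dist_real_def)
  qed
qed

lemma val_close:
  assumes "x \<in> UPs \<union> UNs"
  shows "\<bar>(y t \<bullet> x + b t) - (yinf \<bullet> x + binf)\<bar> \<le> R * norm (y t - yinf) + \<bar>b t - binf\<bar>"
proof -
  have nx: "norm x \<le> R" using assms UP_bound UN_bound by blast
  have "\<bar>(y t - yinf) \<bullet> x\<bar> \<le> norm (y t - yinf) * norm x" by (rule Cauchy_Schwarz_ineq2)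
  also have "\<dots> \<le> norm (y t - yinf) * R" using nx by (simp add: mult_left_mono)
  finally have "\<bar>(y t - yinf) \<bullet> x\<bar> \<le> R * norm (y t - yinf)" by (simp add: mult.commute)
  moreover have "(y t \<bullet> x + b t) - (yinf \<bullet> x + binf) = (y t - yinf) \<bullet> x + (b t - binf)"
    by (simp add: inner_diff_left)
  moreover have "\<bar>(y t - yinf) \<bullet> x + (b t - binf)\<bar> \<le> \<bar>(y t - yinf) \<bullet> x\<bar> + \<bar>b t - binf\<bar>" by (rule abs_triangle_ineq)
  ultimately show ?thesis by linarith
qed

lemma proxyP: assumes "t \<ge> 1" "lab (a (N+t)) = 1" shows "proxy lab c (a (N+t)) (y t) (b t) \<in> UPs"
proof -
  have "proxy lab c (a (N+t)) (y t) (b t) \<in> P t" unfolding P_mem using assms by blast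
  thus ?thesis unfolding UPs_def by blast
qed
lemma proxyQ: assumes "t \<ge> 1" "lab (a (N+t)) = -1" shows "proxy lab c (a (N+t)) (y t) (b t) \<in> UNs"
proof -
  have "proxy lab c (a (N+t)) (y t) (b t) \<in> Q t" unfolding Q_mem using assms by blast
  thus ?thesis unfolding UNs_def by blast
qed

lemma part1: "finite {t. t \<ge> 1 \<and> lhat c (resp c (a (N + t)) (y t) (b t)) (y t) (b t) \<noteq> lab (a (N + t))}"
proof -
  define \<rho> where "\<rho> = D / (R + 1)"
  have rp: "\<rho> > 0" unfolding \<rho>_def using D_pos R_pos by simp
  obtain T where T: "\<forall>t\<ge>T. norm (y t - yinf) < \<rho> \<and> \<bar>b t - binf\<bar> < \<rho>" using ev_close[OF rp] by blast
  have "{t. t \<ge> 1 \<and> lhat c (resp c (a (N + t)) (y t) (b t)) (y t) (b t) \<noteq> lab (a (N + t))} \<subseteq> {..<T}"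
  proof
    fix t assume "t \<in> {t. t \<ge> 1 \<and> lhat c (resp c (a (N + t)) (y t) (b t)) (y t) (b t) \<noteq> lab (a (N + t))}"
    hence t1: "t \<ge> 1" and mis: "lhat c (resp c (a (N + t)) (y t) (b t)) (y t) (b t) \<noteq> lab (a (N + t))" by auto
    show "t \<in> {..<T}"
    proof (rule ccontr)
      assume "t \<notin> {..<T}"
      hence cl: "norm (y t - yinf) < \<rho>" "\<bar>b t - binf\<bar> < \<rho>" using T by auto
      have "R * norm (y t - yinf) \<le> R * \<rho>" using cl R_pos by (simp add: less_imp_le mult_left_mono)
      moreover have "(R + 1) * \<rho> = D" unfolding \<rho>_def using R_pos by simp
      hence "R * \<rho> + \<rho> = D" by (simp add: distrib_right)
      ultimately have small: "R * norm (y t - yinf) + \<bar>b t - binf\<bar> < D"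
        using cl(2) by linarith
      let ?s = "proxy lab c (a (N+t)) (y t) (b t)"
      from mistake_char[where c=c and A="a (N+t)" and y="y t" and b="b t" and lab=lab, OF c_pos lab_a mis]
      show False
      proof
        assume h: "lab (a (N+t)) = 1 \<and> y t \<bullet> ?s + b t < 0"
        hence sP: "?s \<in> UPs" using proxyP t1 by blast
        have "D \<le> yinf \<bullet> ?s + binf" by (rule margin_P[OF sP])
        moreover have "\<bar>(y t \<bullet> ?s + b t) - (yinf \<bullet> ?s + binf)\<bar> \<le> R * norm (y t - yinf) + \<bar>b t - binf\<bar>"
          using sP by (intro val_close) auto
        ultimately show False using h small by linarith
      next
        assume h: "lab (a (N+t)) = -1 \<and> y t \<bullet> ?s + b t \<ge> 0"
        hence sQ: "?s \<in> UNs" using proxyQ t1 by blast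
        have "yinf \<bullet> ?s + binf \<le> - D" by (rule margin_Q[OF sQ])
        moreover have "\<bar>(y t \<bullet> ?s + b t) - (yinf \<bullet> ?s + binf)\<bar> \<le> R * norm (y t - yinf) + \<bar>b t - binf\<bar>"
          using sQ by (intro val_close) auto
        ultimately show False using h small by linarith
      qed
    qed
  qed
  thus ?thesis by (rule finite_subset) simp
qed

lemma part2:
  assumes dc: "d > 2 / c"
  shows "finite {t. t \<ge> 1 \<and> resp c (a (N + t)) (y t) (b t) \<noteq> a (N + t)}"
proof -
  define \<rho> where "\<rho> = (d - 2/c) / (R + 1 + 2/c)"
  have rp: "\<rho> > 0" unfolding \<rho>_def using dc R_pos c_pos by (simp add: add_pos_pos)
  obtain T where T: "\<forall>t\<ge>T. norm (y t - yinf) < \<rho> \<and> \<bar>b t - binf\<bar> < \<rho>" using ev_close[OF rp] by blast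
  let ?Mis = "{t. t \<ge> 1 \<and> lhat c (resp c (a (N + t)) (y t) (b t)) (y t) (b t) \<noteq> lab (a (N + t))}"
  have "{t. t \<ge> 1 \<and> resp c (a (N + t)) (y t) (b t) \<noteq> a (N + t)} \<subseteq> {..<T} \<union> ?Mis"
  proof
    fix t assume "t \<in> {t. t \<ge> 1 \<and> resp c (a (N + t)) (y t) (b t) \<noteq> a (N + t)}"
    hence t1: "t \<ge> 1" and mv: "resp c (a (N + t)) (y t) (b t) \<noteq> a (N + t)" by auto
    show "t \<in> {..<T} \<union> ?Mis"
    proof (cases "lab (a (N+t)) = 1")
      case False
      hence la: "lab (a (N+t)) = -1" using lab_a by blast
      have y0: "y t \<noteq> 0" using mv by (auto simp: resp_def)
      define q where "q = (y t \<bullet> a (N+t) + b t) / norm (y t)"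
      have rng: "0 \<le> q \<and> q < 2 / c" using mv y0 unfolding resp_def q_def Let_def by (auto split: if_splits)
      have r: "resp c (a (N+t)) (y t) (b t) = a (N+t) + (2/c - q) *\<^sub>R vdir (y t)"
        using y0 rng unfolding resp_def q_def Let_def by simp
      have ny: "norm (y t) > 0" using y0 by simp
      have yq: "y t \<bullet> a (N+t) + b t = q * norm (y t)" unfolding q_def using ny by simp
      have "y t \<bullet> resp c (a (N+t)) (y t) (b t) + b t - 2 * norm (y t) / c = 0"
        unfolding r using y0 yq by (simp add: inner_add_right inner_vdir algebra_simps)
      hence "lhat c (resp c (a (N+t)) (y t) (b t)) (y t) (b t) = 1" by (simp add: lhat_def sign1_def)
      thus ?thesis using la t1 by simp
    next
      case True
      show ?thesis
      proof (rule ccontr)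
        assume "t \<notin> {..<T} \<union> ?Mis"
        hence cl: "norm (y t - yinf) < \<rho>" "\<bar>b t - binf\<bar> < \<rho>" using T by auto
        let ?s = "proxy lab c (a (N+t)) (y t) (b t)"
        have mc: "y t \<bullet> ?s + b t = 2 * norm (y t) / c" using moved_char[where c=c and A="a (N+t)" and y="y t" and b="b t" and lab=lab] c_pos mv True by blast
        have sP: "?s \<in> UPs" using proxyP t1 True by blast
        have "d \<le> yinf \<bullet> ?s + binf" using margin_P[OF sP] D_ge by linarith
        moreover have vc: "\<bar>(y t \<bullet> ?s + b t) - (yinf \<bullet> ?s + binf)\<bar> \<le> R * norm (y t - yinf) + \<bar>b t - binf\<bar>"
          using sP by (intro val_close) auto
        moreover have "norm (y t) \<le> 1 + norm (y t - yinf)"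
          using norm_triangle_ineq[of yinf "y t - yinf"] yinf_norm by simp
        hence "2 * norm (y t) / c \<le> 2 / c + 2 / c * norm (y t - yinf)" using c_pos by (simp add: field_simps)
        moreover have "R * norm (y t - yinf) + \<bar>b t - binf\<bar> + 2 / c * norm (y t - yinf) < d - 2/c"
        proof -
          have "R * norm (y t - yinf) \<le> R * \<rho>" using cl R_pos by (simp add: less_imp_le mult_left_mono)
          moreover have "2/c * norm (y t - yinf) \<le> 2/c * \<rho>" using cl(1) c2_pos by (intro mult_left_mono) auto
          moreover have "R + 1 + 2/c \<noteq> 0" using R_pos c2_pos by linarith
          hence "(R + 1 + 2/c) * \<rho> = d - 2/c" unfolding \<rho>_def by simp
          hence "R * \<rho> + \<rho> + 2/c * \<rho> = d - 2/c" by (simp add: distrib_right)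
          ultimately show ?thesis using cl(2) by linarith
        qed
        ultimately show False using mc by linarith
      qed
    qed
  qed
  moreover have "finite ({..<T} \<union> ?Mis)" using part1 by simp
  ultimately show ?thesis by (rule finite_subset)
qed

end

context run begin

lemma part3_det:
  assumes dc: "d > 2 / c"
    and dens: "\<forall>A\<in>AS. \<forall>e>0. \<forall>n. \<exists>i\<ge>n. dist A (a i) < e"
  shows "(y \<longlonglongrightarrow> ys /\<^sub>R norm ys) \<and> (b \<longlonglongrightarrow> bs / norm ys)"
proof -
  obtain T where T: "{t. t \<ge> 1 \<and> resp c (a (N + t)) (y t) (b t) \<noteq> a (N + t)} \<subseteq> {..<T}"
    using part2[OF dc] finite_nat_iff_bounded by blast
  have unm: "proxy lab c (a (N+t)) (y t) (b t) = a (N+t)" if "t \<ge> max T 1" for t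
  proof -
    have "resp c (a (N + t)) (y t) (b t) = a (N + t)" using T that by force
    thus ?thesis by (rule unmoved_proxy[OF c_pos])
  qed
  have uclose: "\<bar>u \<bullet> A - u \<bullet> x\<bar> < e" if "dist A x < e" for A x e
  proof -
    have "\<bar>u \<bullet> A - u \<bullet> x\<bar> = \<bar>u \<bullet> (A - x)\<bar>" by (simp add: inner_diff_right)
    also have "\<dots> \<le> norm u * norm (A - x)" by (rule Cauchy_Schwarz_ineq2)
    also have "\<dots> < e" using that norm_u by (simp add: dist_norm)
    finally show ?thesis .
  qed
  have yclose: "\<bar>yinf \<bullet> A - yinf \<bullet> x\<bar> < e" if "dist A x < e" for A x e
  proof -
    have "\<bar>yinf \<bullet> A - yinf \<bullet> x\<bar> = \<bar>yinf \<bullet> (A - x)\<bar>" by (simp add: inner_diff_right)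
    also have "\<dots> \<le> norm yinf * norm (A - x)" by (rule Cauchy_Schwarz_ineq2)
    also have "\<dots> < e" using that yinf_norm by (simp add: dist_norm)
    finally show ?thesis .
  qed
  have approx: "\<exists>x. dist A x < e \<and> ((lab A = 1 \<and> x \<in> UPs) \<or> (lab A = -1 \<and> x \<in> UNs))"
    if A: "A \<in> AS" and e: "e > 0" for A e
  proof -
    define e' where "e' = min e d"
    have e': "e' > 0" "e' \<le> e" "e' \<le> d" unfolding e'_def using e d_pos by auto
    obtain i where i: "i \<ge> N + max T 1" "dist A (a i) < e'" using dens A e'(1) by blast
    define \<tau> where "\<tau> = i - N"
    have ti: "i = N + \<tau>" and tt: "\<tau> \<ge> max T 1" unfolding \<tau>_def using i(1) by auto
    have pr: "proxy lab c (a (N+\<tau>)) (y \<tau>) (b \<tau>) = a i" using unm[OF tt] ti by simp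
    have t1: "\<tau> \<ge> 1" using tt by simp
    have uc: "\<bar>u \<bullet> A - u \<bullet> a i\<bar> < d" using uclose[OF i(2)] e' by linarith
    show ?thesis
    proof (cases "lab A = 1")
      case True
      have "lab (a i) = 1"
      proof (rule ccontr)
        assume "lab (a i) \<noteq> 1"
        hence "lab (a i) = -1" using lab_a by blast
        hence "u \<bullet> a i + \<beta> \<le> -d" using marg_AS(2)[OF aAS] by blast
        moreover have "d \<le> u \<bullet> A + \<beta>" using marg_AS(1)[OF A True] .
        ultimately show False using uc d_pos by linarith
      qed
      hence "a i \<in> UPs" using proxyP[OF t1] pr ti by simp
      thus ?thesis using True i(2) e' by (intro exI[of _ "a i"]) auto
    next
      case False
      hence la: "lab A = -1" using labels A by auto
      have "lab (a i) = -1"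
      proof (rule ccontr)
        assume "lab (a i) \<noteq> -1"
        hence "lab (a i) = 1" using lab_a by blast
        hence "d \<le> u \<bullet> a i + \<beta>" using marg_AS(1)[OF aAS] by blast
        moreover have "u \<bullet> A + \<beta> \<le> -d" using marg_AS(2)[OF A la] .
        ultimately show False using uc d_pos by linarith
      qed
      hence "a i \<in> UNs" using proxyQ[OF t1] pr ti by simp
      thus ?thesis using la i(2) e' by (intro exI[of _ "a i"]) auto
    qed
  qed
  have ASP: "D \<le> yinf \<bullet> A + binf" if A: "A \<in> AS" "lab A = 1" for A
  proof (rule field_le_epsilon)
    fix e :: real assume e: "e > 0"
    obtain x where x: "dist A x < e" "x \<in> UPs" using approx[OF A(1) e] A(2) by auto
    have "D \<le> yinf \<bullet> x + binf" by (rule margin_P[OF x(2)])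
    thus "D \<le> yinf \<bullet> A + binf + e" using yclose[OF x(1)] by linarith
  qed
  have ASQ: "yinf \<bullet> A + binf \<le> - D" if A: "A \<in> AS" "lab A = -1" for A
  proof (rule field_le_epsilon)
    fix e :: real assume e: "e > 0"
    obtain x where x: "dist A x < e" "x \<in> UNs" using approx[OF A(1) e] A(2) by auto
    have "yinf \<bullet> x + binf \<le> -D" by (rule margin_Q[OF x(2)])
    thus "yinf \<bullet> A + binf \<le> - D + e" using yclose[OF x(1)] by linarith
  qed
  have sm: "D \<le> smargin AS lab yinf binf"
    unfolding smargin_def
  proof (rule cINF_greatest)
    show "AS \<noteq> {}" using aAS by blast
    fix A assume A: "A \<in> AS"
    show "D \<le> of_int (lab A) * (yinf \<bullet> A + binf) / norm yinf"
    proof (cases "lab A = 1")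
      case True thus ?thesis using ASP[OF A True] yinf_norm by simp
    next
      case False
      hence "lab A = -1" using labels A by auto
      thus ?thesis using ASQ[OF A] yinf_norm by simp
    qed
  qed
  have y0: "yinf \<noteq> 0" using yinf_norm by auto
  have "smargin AS lab yinf binf \<le> d" unfolding d_def using mmax y0 by blast
  hence Dd: "D = d" using sm D_ge by linarith
  have "M \<le> F u" using M_le_gap F_u Dd unfolding D_def by simp
  hence uy: "u = yinf" using norm_u by (intro yinf_unique) auto
  have mP1: "d - \<beta> \<le> mP" unfolding mP_def using UP_ne
  proof (intro cInf_greatest)
    fix v assume "v \<in> (\<lambda>x. yinf \<bullet> x) ` UPs"
    then obtain x where "x \<in> UPs" "v = yinf \<bullet> x" by blast
    thus "d - \<beta> \<le> v" using P_half' uy unfolding UPs_def by force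
  qed auto
  have MQ1: "MQ \<le> -d - \<beta>" unfolding MQ_def using UN_ne
  proof (intro cSup_least)
    fix v assume "v \<in> (\<lambda>x. yinf \<bullet> x) ` UNs"
    then obtain x where "x \<in> UNs" "v = yinf \<bullet> x" by blast
    thus "v \<le> -d - \<beta>" using Q_half' uy unfolding UNs_def by force
  qed auto
  have "mP - MQ = 2 * d" using Dd unfolding D_def by simp
  hence "mP = d - \<beta>" "MQ = -d - \<beta>" using mP1 MQ1 by linarith+
  hence bb: "binf = \<beta>" unfolding binf_def by simp
  show ?thesis using y_conv b_conv uy bb unfolding u_def \<beta>_def by simp
qed

end

lemma prob_hit:
  fixes X :: "nat \<Rightarrow> 'w \<Rightarrow> 'a::euclidean_space"
  assumes M: "prob_space M" and ind: "prob_space.indep_vars M (\<lambda>_. borel) X UNIV"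
    and dst: "\<forall>i. distr M borel (X i) = P" and sP: "sets P = sets borel" and PP: "prob_space P"
    and C: "C \<in> sets borel" and pos: "measure P C > 0"
  shows "AE \<omega> in M. \<exists>i\<ge>n. X i \<omega> \<in> C"
proof -
  interpret prob_space M by (rule M)
  have Xm: "X i \<in> borel_measurable M" for i using ind unfolding indep_vars_def2 by auto
  have spP: "space P = UNIV" using sets_eq_imp_space_eq[OF sP] by simp
  define p where "p = measure P C"
  have p1: "p \<le> 1" unfolding p_def using prob_space.prob_le_1[OF PP] .
  have pc: "measure M (X i -` (- C) \<inter> space M) = 1 - p" for i
  proof -
    have "measure M (X i -` (- C) \<inter> space M) = measure (distr M borel (X i)) (- C)"
      using C by (intro measure_distr[symmetric] Xm) auto
    also have "\<dots> = measure P (space P - C)" using dst spP by (simp add: Compl_eq_Diff_UNIV)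
    also have "\<dots> = 1 - p" unfolding p_def using C sP by (intro prob_space.prob_compl[OF PP]) simp
    finally show ?thesis .
  qed
  define E where "E = {\<omega> \<in> space M. \<not> (\<exists>i\<ge>n. X i \<omega> \<in> C)}"
  have Em: "E \<in> sets M" unfolding E_def using Xm C by measurable
  have bnd: "measure M E \<le> (1 - p) ^ Suc m" for m
  proof -
    define J where "J = {n..<n + Suc m}"
    define B where "B = (\<Inter>i\<in>J. X i -` (- C) \<inter> space M)"
    have Jn: "J \<noteq> {}" "finite J" unfolding J_def by auto
    have nC: "- C \<in> sets borel" using C by auto
    have Xi: "X i -` (- C) \<inter> space M \<in> sets M" for i using measurable_sets[OF Xm nC] .
    have Bm: "B \<in> sets M" unfolding B_def using Jn Xi
      by (intro sets.finite_INT) auto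
    have "E \<subseteq> B" unfolding E_def B_def J_def by auto
    hence "measure M E \<le> measure M B" using Bm by (intro finite_measure_mono)
    also have "measure M B = (\<Prod>i\<in>J. measure M (X i -` (- C) \<inter> space M))"
      unfolding B_def using Jn C by (intro indep_varsD[OF ind]) auto
    also have "\<dots> = (1 - p) ^ Suc m" using pc unfolding J_def by simp
    finally show ?thesis .
  qed
  have "(\<lambda>m. (1 - p) ^ Suc m) \<longlonglongrightarrow> 0"
  proof -
    have "norm (1 - p) < 1" using pos p1 unfolding p_def by simp
    hence "(\<lambda>m. (1 - p) ^ m) \<longlonglongrightarrow> 0" by (rule LIMSEQ_power_zero)
    thus ?thesis by (rule LIMSEQ_Suc)
  qed
  hence "measure M E \<le> 0" using bnd by (intro LIMSEQ_le_const[of _ 0]) auto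
  hence "measure M E = 0" using measure_nonneg[of M E] by linarith
  hence "emeasure M E = 0" by (simp add: emeasure_eq_measure)
  thus ?thesis using AE_iff_measurable[OF Em] unfolding E_def by simp
qed

lemma dense_ae:
  fixes X :: "nat \<Rightarrow> 'w \<Rightarrow> 'a::euclidean_space"
  assumes M: "prob_space M" and ind: "prob_space.indep_vars M (\<lambda>_. borel) X UNIV"
    and dst: "\<forall>i. distr M borel (X i) = P" and sP: "sets P = sets borel" and PP: "prob_space P"
    and supp: "\<forall>A\<in>AS. \<forall>e>0. measure P (cball A e) > 0"
  shows "AE \<omega> in M. \<forall>A\<in>AS. \<forall>e>0. \<forall>n. \<exists>i\<ge>n. dist A (X i \<omega>) < e"
proof -
  obtain B :: "'a set set" where B: "countable B" "\<And>C. C \<in> B \<Longrightarrow> open C"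
    "\<And>S. open S \<Longrightarrow> \<exists>U. U \<subseteq> B \<and> S = \<Union>U"
    using univ_second_countable by blast
  define B' where "B' = {C \<in> B. C \<inter> AS \<noteq> {}}"
  have cB': "countable B'" unfolding B'_def using B(1) by simp
  have posC: "measure P C > 0" if CB: "C \<in> B'" for C
  proof -
    obtain A where A: "A \<in> C" "A \<in> AS" using CB unfolding B'_def by blast
    have oC: "open C" using CB B(2) unfolding B'_def by blast
    then obtain e where e: "e > 0" "cball A e \<subseteq> C" using A(1) open_contains_cball by blast
    have "measure P (cball A e) \<le> measure P C"
      using e(2) oC sP by (intro finite_measure.finite_measure_mono[OF prob_space.finite_measure[OF PP]]) auto
    thus ?thesis using supp A(2) e(1) by (meson less_le_trans)
  qed
  have "\<forall>C\<in>B'. \<forall>n. AE \<omega> in M. \<exists>i\<ge>n. X i \<omega> \<in> C"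
  proof (intro ballI allI)
    fix C n assume "C \<in> B'"
    moreover hence "C \<in> sets borel" using B(2) unfolding B'_def by auto
    ultimately show "AE \<omega> in M. \<exists>i\<ge>n. X i \<omega> \<in> C"
      using prob_hit[OF M ind dst sP PP] posC by blast
  qed
  hence "\<forall>C\<in>B'. AE \<omega> in M. \<forall>n. \<exists>i\<ge>n. X i \<omega> \<in> C" by (simp add: AE_all_countable)
  hence ae: "AE \<omega> in M. \<forall>C\<in>B'. \<forall>n. \<exists>i\<ge>n. X i \<omega> \<in> C" by (simp add: AE_ball_countable[OF cB'])
  show ?thesis
  proof (rule AE_mp[OF ae], rule AE_I2, intro impI ballI allI impI)
    fix \<omega> A e n assume h: "\<forall>C\<in>B'. \<forall>n. \<exists>i\<ge>n. X i \<omega> \<in> C" and A: "A \<in> AS" and e: "(e::real) > 0"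
    obtain U where U: "U \<subseteq> B" "ball A e = \<Union>U" using B(3)[of "ball A e"] by auto
    have "A \<in> ball A e" using e by simp
    then obtain C where C: "C \<in> U" "A \<in> C" using U(2) by auto
    have "C \<in> B'" using C U A unfolding B'_def by blast
    then obtain i where i: "i \<ge> n" "X i \<omega> \<in> C" using h by blast
    have "X i \<omega> \<in> ball A e" using C(1) i(2) U(2) by blast
    thus "\<exists>i\<ge>n. dist A (X i \<omega>) < e" using i(1) by auto
  qed
qed

theorem mainTheorem13:
  fixes AS :: "'a::euclidean_space set" and lab :: "'a \<Rightarrow> int" and c :: real
    and ys :: 'a and bs :: real
  assumes c_pos: "c > 0"
    and labels: "\<forall>A\<in>AS. lab A \<in> {-1, 1}"
    and margin_attained: "ys \<noteq> 0" "\<forall>y b. y \<noteq> 0 \<longrightarrow> smargin AS lab y b \<le> smargin AS lab ys bs"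
    and margin_pos: "smargin AS lab ys bs > 0"
    and bounded_AS: "bounded AS"
  shows
   "(\<forall>a N y b z. smm_run AS lab c (\<lambda>t. 1 / sqrt (real t)) a N y b z \<longrightarrow>
       finite {t. t \<ge> 1 \<and>
          lhat c (resp c (a (N + t)) (y t) (b t)) (y t) (b t) \<noteq> lab (a (N + t))})
    \<and> (smargin AS lab ys bs > 2 / c \<longrightarrow>
       (\<forall>a N y b z. smm_run AS lab c (\<lambda>t. 1 / sqrt (real t)) a N y b z \<longrightarrow>
         finite {t. t \<ge> 1 \<and> resp c (a (N + t)) (y t) (b t) \<noteq> a (N + t)}))
    \<and> (smargin AS lab ys bs > 2 / c \<longrightarrow>
       (\<forall>(M :: 'w measure) (P :: 'a measure) (X :: nat \<Rightarrow> 'w \<Rightarrow> 'a).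
         closed AS \<and> prob_space P \<and> sets P = sets borel \<and>
         (\<forall>A\<in>AS. \<forall>e>0. measure P (cball A e) > 0) \<and>
         (\<forall>A. A \<notin> AS \<longrightarrow> (\<exists>e>0. measure P (cball A e) = 0)) \<and>
         prob_space M \<and> prob_space.indep_vars M (\<lambda>_. borel) X UNIV \<and>
         (\<forall>i. distr M borel (X i) = P)
         \<longrightarrow> (AE \<omega> in M. \<forall>N y b z.
                smm_run AS lab c (\<lambda>t. 1 / sqrt (real t)) (\<lambda>i. X i \<omega>) N y b z \<longrightarrow>
                (y \<longlonglongrightarrow> ys /\<^sub>R norm ys) \<and> (b \<longlonglongrightarrow> bs / norm ys))))"
proof -
  have R: "run AS lab c ys bs a N y b z" if "smm_run AS lab c (\<lambda>t. 1 / sqrt (real t)) a N y b z"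
    for a N y b z
    unfolding run_def using c_pos labels margin_attained margin_pos bounded_AS that by blast
  have P1: "\<forall>a N y b z. smm_run AS lab c (\<lambda>t. 1 / sqrt (real t)) a N y b z \<longrightarrow>
       finite {t. t \<ge> 1 \<and>
          lhat c (resp c (a (N + t)) (y t) (b t)) (y t) (b t) \<noteq> lab (a (N + t))}"
  proof (intro allI impI)
    fix a N y b z assume h: "smm_run AS lab c (\<lambda>t. 1 / sqrt (real t)) a N y b z"
    interpret run AS lab c ys bs a N y b z by (rule R[OF h])
    show "finite {t. t \<ge> 1 \<and> lhat c (resp c (a (N + t)) (y t) (b t)) (y t) (b t) \<noteq> lab (a (N + t))}"
      by (rule part1)
  qed
  have P2: "smargin AS lab ys bs > 2 / c \<longrightarrow>
       (\<forall>a N y b z. smm_run AS lab c (\<lambda>t. 1 / sqrt (real t)) a N y b z \<longrightarrow>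
         finite {t. t \<ge> 1 \<and> resp c (a (N + t)) (y t) (b t) \<noteq> a (N + t)})"
  proof (intro impI allI)
    fix a N y b z assume dc: "smargin AS lab ys bs > 2 / c"
      and h: "smm_run AS lab c (\<lambda>t. 1 / sqrt (real t)) a N y b z"
    interpret run AS lab c ys bs a N y b z by (rule R[OF h])
    show "finite {t. t \<ge> 1 \<and> resp c (a (N + t)) (y t) (b t) \<noteq> a (N + t)}"
      using part2 dc unfolding d_def by blast
  qed
  have P3: "smargin AS lab ys bs > 2 / c \<longrightarrow>
       (\<forall>(M :: 'w measure) (P :: 'a measure) (X :: nat \<Rightarrow> 'w \<Rightarrow> 'a).
         closed AS \<and> prob_space P \<and> sets P = sets borel \<and>
         (\<forall>A\<in>AS. \<forall>e>0. measure P (cball A e) > 0) \<and>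
         (\<forall>A. A \<notin> AS \<longrightarrow> (\<exists>e>0. measure P (cball A e) = 0)) \<and>
         prob_space M \<and> prob_space.indep_vars M (\<lambda>_. borel) X UNIV \<and>
         (\<forall>i. distr M borel (X i) = P)
         \<longrightarrow> (AE \<omega> in M. \<forall>N y b z.
                smm_run AS lab c (\<lambda>t. 1 / sqrt (real t)) (\<lambda>i. X i \<omega>) N y b z \<longrightarrow>
                (y \<longlonglongrightarrow> ys /\<^sub>R norm ys) \<and> (b \<longlonglongrightarrow> bs / norm ys)))"
  proof (intro impI allI)
    fix M :: "'w measure" and P :: "'a measure" and X :: "nat \<Rightarrow> 'w \<Rightarrow> 'a"
    assume dc: "smargin AS lab ys bs > 2 / c"
    assume H: "closed AS \<and> prob_space P \<and> sets P = sets borel \<and>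
         (\<forall>A\<in>AS. \<forall>e>0. measure P (cball A e) > 0) \<and>
         (\<forall>A. A \<notin> AS \<longrightarrow> (\<exists>e>0. measure P (cball A e) = 0)) \<and>
         prob_space M \<and> prob_space.indep_vars M (\<lambda>_. borel) X UNIV \<and>
         (\<forall>i. distr M borel (X i) = P)"
    have ae: "AE \<omega> in M. \<forall>A\<in>AS. \<forall>e>0. \<forall>n. \<exists>i\<ge>n. dist A (X i \<omega>) < e"
      using H by (intro dense_ae[of M X P AS]) auto
    show "AE \<omega> in M. \<forall>N y b z.
                smm_run AS lab c (\<lambda>t. 1 / sqrt (real t)) (\<lambda>i. X i \<omega>) N y b z \<longrightarrow>
                (y \<longlonglongrightarrow> ys /\<^sub>R norm ys) \<and> (b \<longlonglongrightarrow> bs / norm ys)"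
    proof (rule eventually_mono[OF ae], intro allI impI)
      fix \<omega> N y b z
      assume dens: "\<forall>A\<in>AS. \<forall>e>0. \<forall>n. \<exists>i\<ge>n. dist A (X i \<omega>) < e"
        and h: "smm_run AS lab c (\<lambda>t. 1 / sqrt (real t)) (\<lambda>i. X i \<omega>) N y b z"
      interpret run AS lab c ys bs "\<lambda>i. X i \<omega>" N y b z by (rule R[OF h])
      show "(y \<longlonglongrightarrow> ys /\<^sub>R norm ys) \<and> (b \<longlonglongrightarrow> bs / norm ys)"
        using part3_det dc dens unfolding d_def by blast
    qed
  qed
  show ?thesis using P1 P2 P3 by blast
qed

end
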